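(* Let $G_4$ be the Lie group of real $4\times4$ matrices $$X=\begin{pmatrix}1&x_2&x_3&x_4\\0&1&x_1&\frac{x_1^2}{2}\\0&0&1&x_1\\0&0&0&1\end{pmatrix},\qquad (x_1,x_2,x_3,x_4)\in\mathbb{R}^4,$$ with Lie algebra basis $A_1=E_{23}+E_{34}$, $A_2=E_{12}$, $A_3=[A_2,A_1]$, $A_4=[A_3,A_1]$ (where $E_{ij}$ is the matrix unit and $[A,B]=AB-BA$). Consider the drift-free left-invariant control system $$\dot X=X(A_1u_1+A_2u_2),\qquad X\in G_4,$$ with smooth controls $u_1,u_2$, and the cost $$J(u_1,u_2)=\frac12\int_0^{t_f}\big(c_1u_1^2(t)+c_2u_2^2(t)\big)\,dt,\qquad c_1>0,\ c_2>0.$$ Then the controls which minimize $J$ and steer the system from $X(0)=X_0$ at $t=0$ to $X(t_f)=X_f$ at $t=t_f$ are given by $u_1=z_1/c_1$, $u_2=z_2/c_2$, where $z_1,z_2,z_3,z_4$ are solutions of $$\dot z_1=\frac1{c_2}z_2z_3,\qquad \dot z_2=-\frac1{c_1}z_1z_3,\qquad \dot z_3=-\frac1{c_1}z_1z_4,\qquad \dot z_4=0.$$ *)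

theory Defs
  imports "HOL-Analysis.Analysis" "HOL-Library.Numeral_Type"
begin

text \<open>Indices of 4x4 matrices: the elements of type 4 are numbered 0,1,2,3.\<close>
definition idx4 :: "4 \<Rightarrow> nat" where
  "idx4 i = nat (Rep_bit0 i)"

text \<open>4x4 real matrix from a list of rows (row/column 1-based in the paper = list position + 1).\<close>
definition mat4 :: "real list list \<Rightarrow> real^4^4" where
  "mat4 M = (\<chi> i j. M ! idx4 i ! idx4 j)"

text \<open>Matrix unit E_ij (1-based indices i j in 1..4).\<close>
definition Eu :: "nat \<Rightarrow> nat \<Rightarrow> real^4^4" where
  "Eu i j = (\<chi> a b. if idx4 a + 1 = i \<and> idx4 b + 1 = j then 1 else 0)"

definition lie_br :: "real^4^4 \<Rightarrow> real^4^4 \<Rightarrow> real^4^4" where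
  "lie_br A B = A ** B - B ** A"

definition G4 :: "(real^4^4) set" where
  "G4 = {mat4 [[1, x2, x3, x4], [0, 1, x1, x1^2 / 2], [0, 0, 1, x1], [0, 0, 0, 1]]
          | x1 x2 x3 x4. True}"

definition A1 :: "real^4^4" where "A1 = Eu 2 3 + Eu 3 4"
definition A2 :: "real^4^4" where "A2 = Eu 1 2"
definition A3 :: "real^4^4" where "A3 = lie_br A2 A1"
definition A4 :: "real^4^4" where "A4 = lie_br A3 A1"

definition smooth_control :: "real \<Rightarrow> (real \<Rightarrow> real) \<Rightarrow> bool" where
  "smooth_control tf u \<longleftrightarrow> (\<exists>U. open U \<and> {0..tf} \<subseteq> U \<and>
      (\<forall>k. \<forall>x\<in>U. ((deriv ^^ k) u) differentiable (at x)))"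

definition trajectory ::
  "real \<Rightarrow> (real \<Rightarrow> real) \<Rightarrow> (real \<Rightarrow> real) \<Rightarrow> (real \<Rightarrow> real^4^4) \<Rightarrow> bool" where
  "trajectory tf u1 u2 X \<longleftrightarrow> (\<forall>t\<in>{0..tf}. X t \<in> G4 \<and>
      (X has_vector_derivative (X t ** (u1 t *\<^sub>R A1 + u2 t *\<^sub>R A2))) (at t within {0..tf}))"

definition steers ::
  "real \<Rightarrow> real^4^4 \<Rightarrow> real^4^4 \<Rightarrow> (real \<Rightarrow> real) \<Rightarrow> (real \<Rightarrow> real) \<Rightarrow> bool" where
  "steers tf X0 Xf u1 u2 \<longleftrightarrow> smooth_control tf u1 \<and> smooth_control tf u2 \<and>
      (\<exists>X. trajectory tf u1 u2 X \<and> X 0 = X0 \<and> X tf = Xf)"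

definition cost :: "real \<Rightarrow> real \<Rightarrow> real \<Rightarrow> (real \<Rightarrow> real) \<Rightarrow> (real \<Rightarrow> real) \<Rightarrow> real" where
  "cost c1 c2 tf u1 u2 = 1/2 * integral {0..tf} (\<lambda>t. c1 * (u1 t)^2 + c2 * (u2 t)^2)"

end

theory Submission
  imports Defs
begin

lemma idx4_vals[simp]: "idx4 0 = 0" "idx4 1 = 1" "idx4 2 = 2" "idx4 3 = 3"
  by (simp_all add: idx4_def bit0.Rep_0 bit0.Rep_1 bit0.Rep_numeral)

lemma four_eq0: "(4::4) = 0" by simp

lemma forall4: "(\<forall>i::4. P i) \<longleftrightarrow> P 0 \<and> P 1 \<and> P 2 \<and> P 3"
  using forall_4[of P] by (auto simp: four_eq0)

lemma sum4: "sum f (UNIV::4 set) = f 0 + f 1 + f 2 + f 3"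
  using sum_4[of f] by (simp add: four_eq0 ac_simps)

definition Mx :: "real \<Rightarrow> real \<Rightarrow> real \<Rightarrow> real \<Rightarrow> real^4^4" where
  "Mx a b c d = mat4 [[1, b, c, d], [0, 1, a, a^2 / 2], [0, 0, 1, a], [0, 0, 0, 1]]"

lemma G4_Mx: "G4 = {Mx a b c d | a b c d. True}"
  by (auto simp: G4_def Mx_def)

lemma mat4_nth: "mat4 M $ i $ j = M ! idx4 i ! idx4 j" by (simp add: mat4_def)

lemma Eu_nth: "Eu i j $ a $ b = (if idx4 a + 1 = i \<and> idx4 b + 1 = j then 1 else 0)"
  by (simp add: Eu_def)

lemma Mx_prod: "Mx a b c d ** (p *\<^sub>R A1 + q *\<^sub>R A2) =
   mat4 [[0, q, p*b, p*c], [0, 0, p, p*a], [0, 0, 0, p], [0, 0, 0, 0]]"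
  unfolding vec_eq_iff forall4
  by (simp add: matrix_matrix_mult_def sum4 Mx_def mat4_nth A1_def A2_def Eu_nth)

lemma Mx_lin: "Mx a b c d = Mx 0 0 0 0 + a *\<^sub>R (Eu 2 3 + Eu 3 4) + b *\<^sub>R Eu 1 2 + c *\<^sub>R Eu 1 3
   + d *\<^sub>R Eu 1 4 + (a^2/2) *\<^sub>R Eu 2 4"
  unfolding vec_eq_iff forall4
  by (simp add: Mx_def mat4_nth Eu_nth)

lemma vd_scale:
  fixes c :: "'a::real_normed_vector"
  assumes "(f has_real_derivative f') (at t within S)"
  shows "((\<lambda>x. f x *\<^sub>R c) has_vector_derivative (f' *\<^sub>R c)) (at t within S)"
  using has_vector_derivative_scaleR[OF assms has_vector_derivative_const[of c]] by simp

lemma traj_build: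
  assumes d1: "\<And>t. t \<in> {0..tf} \<Longrightarrow> (y1 has_real_derivative U1 t) (at t within {0..tf})"
    and d2: "\<And>t. t \<in> {0..tf} \<Longrightarrow> (y2 has_real_derivative U2 t) (at t within {0..tf})"
    and d3: "\<And>t. t \<in> {0..tf} \<Longrightarrow> (y3 has_real_derivative U1 t * y2 t) (at t within {0..tf})"
    and d4: "\<And>t. t \<in> {0..tf} \<Longrightarrow> (y4 has_real_derivative U1 t * y3 t) (at t within {0..tf})"
  shows "trajectory tf U1 U2 (\<lambda>t. Mx (y1 t) (y2 t) (y3 t) (y4 t))"
  unfolding trajectory_def
proof (intro ballI conjI)
  fix t assume t: "t \<in> {0..tf}"
  show "Mx (y1 t) (y2 t) (y3 t) (y4 t) \<in> G4" by (auto simp: G4_Mx)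
  have sq: "((\<lambda>t. (y1 t)^2/2) has_real_derivative y1 t * U1 t) (at t within {0..tf})"
  proof -
    have "((\<lambda>t. y1 t * y1 t / 2) has_real_derivative (U1 t * y1 t + U1 t * y1 t) / 2) (at t within {0..tf})"
      using DERIV_cdivide[OF DERIV_mult[OF d1[OF t] d1[OF t]], of 2] by simp
    then show ?thesis by (simp add: power2_eq_square algebra_simps)
  qed
  have "((\<lambda>t. Mx 0 0 0 0 + y1 t *\<^sub>R (Eu 2 3 + Eu 3 4) + y2 t *\<^sub>R Eu 1 2 + y3 t *\<^sub>R Eu 1 3
   + y4 t *\<^sub>R Eu 1 4 + ((y1 t)^2/2) *\<^sub>R Eu 2 4) has_vector_derivative
     (0 + U1 t *\<^sub>R (Eu 2 3 + Eu 3 4) + U2 t *\<^sub>R Eu 1 2 + (U1 t * y2 t) *\<^sub>R Eu 1 3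
   + (U1 t * y3 t) *\<^sub>R Eu 1 4 + (y1 t * U1 t) *\<^sub>R Eu 2 4)) (at t within {0..tf})"
    by (intro has_vector_derivative_add vd_scale d1[OF t] d2[OF t] d3[OF t] d4[OF t] sq
        has_vector_derivative_const)
  moreover have "0 + U1 t *\<^sub>R (Eu 2 3 + Eu 3 4) + U2 t *\<^sub>R Eu 1 2 + (U1 t * y2 t) *\<^sub>R Eu 1 3
   + (U1 t * y3 t) *\<^sub>R Eu 1 4 + (y1 t * U1 t) *\<^sub>R Eu 2 4 =
     Mx (y1 t) (y2 t) (y3 t) (y4 t) ** (U1 t *\<^sub>R A1 + U2 t *\<^sub>R A2)"
    unfolding Mx_prod vec_eq_iff forall4
    by (simp add: mat4_nth Eu_nth)
  ultimately show "((\<lambda>t. Mx (y1 t) (y2 t) (y3 t) (y4 t)) has_vector_derivative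
     (Mx (y1 t) (y2 t) (y3 t) (y4 t) ** (U1 t *\<^sub>R A1 + U2 t *\<^sub>R A2))) (at t within {0..tf})"
    by (subst Mx_lin) simp
qed

lemma comp_deriv:
  fixes X :: "real \<Rightarrow> real^4^4" and i j :: 4
  assumes "(X has_vector_derivative D) F"
  shows "((\<lambda>t. X t $ i $ j) has_real_derivative D $ i $ j) F"
proof -
  have "bounded_linear (\<lambda>x::real^4^4. x $ i $ j)"
    using bounded_linear_compose[OF bounded_linear_vec_nth[of j] bounded_linear_vec_nth[of i]] by (simp add: o_def)
  from bounded_linear.has_vector_derivative[OF this assms] show ?thesis
    by (simp add: has_real_derivative_iff_has_vector_derivative)
qed

lemma traj_coords:
  assumes tr: "trajectory tf U1 U2 X" and t: "t \<in> {0..tf}"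
  shows "X t = Mx (X t $ 1 $ 2) (X t $ 0 $ 1) (X t $ 0 $ 2) (X t $ 0 $ 3)"
    and "((\<lambda>t. X t $ 1 $ 2) has_real_derivative U1 t) (at t within {0..tf})"
    and "((\<lambda>t. X t $ 0 $ 1) has_real_derivative U2 t) (at t within {0..tf})"
    and "((\<lambda>t. X t $ 0 $ 2) has_real_derivative U1 t * X t $ 0 $ 1) (at t within {0..tf})"
    and "((\<lambda>t. X t $ 0 $ 3) has_real_derivative U1 t * X t $ 0 $ 2) (at t within {0..tf})"
proof -
  from tr t have G: "X t \<in> G4" and D: "(X has_vector_derivative (X t ** (U1 t *\<^sub>R A1 + U2 t *\<^sub>R A2))) (at t within {0..tf})"
    by (auto simp: trajectory_def)
  from G obtain a b c d where X: "X t = Mx a b c d" by (auto simp: G4_Mx)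
  have e: "X t $ 1 $ 2 = a" "X t $ 0 $ 1 = b" "X t $ 0 $ 2 = c" "X t $ 0 $ 3 = d"
    by (simp_all add: X Mx_def mat4_nth)
  show "X t = Mx (X t $ 1 $ 2) (X t $ 0 $ 1) (X t $ 0 $ 2) (X t $ 0 $ 3)" using X e by simp
  note C = comp_deriv[OF D]
  show "((\<lambda>t. X t $ 1 $ 2) has_real_derivative U1 t) (at t within {0..tf})"
    using C[of 1 2] by (simp add: X Mx_prod mat4_nth)
  show "((\<lambda>t. X t $ 0 $ 1) has_real_derivative U2 t) (at t within {0..tf})"
    using C[of 0 1] by (simp add: X Mx_prod mat4_nth)
  show "((\<lambda>t. X t $ 0 $ 2) has_real_derivative U1 t * X t $ 0 $ 1) (at t within {0..tf})"
  proof -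
    have "(X t ** (U1 t *\<^sub>R A1 + U2 t *\<^sub>R A2)) $ 0 $ 2 = U1 t * X t $ 0 $ 1"
      unfolding X Mx_prod by (simp add: mat4_nth Mx_def)
    then show ?thesis using C[of 0 2] by simp
  qed
  show "((\<lambda>t. X t $ 0 $ 3) has_real_derivative U1 t * X t $ 0 $ 2) (at t within {0..tf})"
  proof -
    have "(X t ** (U1 t *\<^sub>R A1 + U2 t *\<^sub>R A2)) $ 0 $ 3 = U1 t * X t $ 0 $ 2"
      unfolding X Mx_prod by (simp add: mat4_nth Mx_def)
    then show ?thesis using C[of 0 3] by simp
  qed
qed


lemma smooth_cont: "smooth_control tf u \<Longrightarrow> continuous_on {0..tf} u"
proof -
  assume "smooth_control tf u"
  then obtain U where U: "open U" "{0..tf} \<subseteq> U" "\<And>k x. x \<in> U \<Longrightarrow> ((deriv ^^ k) u) differentiable (at x)"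
    unfolding smooth_control_def by blast
  have "\<And>x. x \<in> {0..tf} \<Longrightarrow> isCont u x"
    using U(2) U(3)[of _ 0] by (auto intro!: differentiable_imp_continuous_within)
  then show ?thesis by (simp add: continuous_at_imp_continuous_on)
qed

lemma rpf_deriv: "real_polynomial_function p \<Longrightarrow> real_polynomial_function (deriv p)"
proof -
  assume "real_polynomial_function p"
  then obtain p' where "real_polynomial_function p'" "\<And>x. (p has_real_derivative (p' x)) (at x)"
    using has_real_derivative_polynomial_function by blast
  moreover have "deriv p = p'" using calculation(2) by (auto intro!: ext DERIV_imp_deriv)
  ultimately show ?thesis by simp
qed

lemma rpf_derivs: "real_polynomial_function p \<Longrightarrow> real_polynomial_function ((deriv ^^ k) p)"
  by (induction k) (auto intro: rpf_deriv)

lemma smooth_add: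
  assumes "smooth_control tf u" and p: "real_polynomial_function p"
  shows "smooth_control tf (\<lambda>t. u t + p t)"
proof -
  obtain U where U: "open U" "{0..tf} \<subseteq> U" "\<And>k x. x \<in> U \<Longrightarrow> ((deriv ^^ k) u) differentiable (at x)"
    using assms(1) unfolding smooth_control_def by blast
  have pd: "((deriv ^^ k) p) differentiable (at x)" for k x
    using rpf_derivs[OF p] differentiable_at_real_polynomial_function by blast
  have eq: "\<forall>x\<in>U. (deriv ^^ k) (\<lambda>t. u t + p t) x = (deriv ^^ k) u x + (deriv ^^ k) p x" for k
  proof (induction k)
    case 0 then show ?case by simp
  next
    case (Suc k)
    show ?case
    proof
      fix x assume x: "x \<in> U"
      have ev: "eventually (\<lambda>y. (deriv ^^ k) (\<lambda>t. u t + p t) y = (deriv ^^ k) u y + (deriv ^^ k) p y) (nhds x)"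
        using Suc U(1) x eventually_nhds by blast
      have "(deriv ^^ Suc k) (\<lambda>t. u t + p t) x = deriv (\<lambda>y. (deriv ^^ k) u y + (deriv ^^ k) p y) x"
        using deriv_cong_ev[OF ev refl] by simp
      also have "\<dots> = deriv ((deriv ^^ k) u) x + deriv ((deriv ^^ k) p) x"
        using U(3)[OF x, of k] pd[of k x]
        by (intro deriv_add) (auto simp: field_differentiable_def real_differentiable_def)
      finally show "(deriv ^^ Suc k) (\<lambda>t. u t + p t) x = (deriv ^^ Suc k) u x + (deriv ^^ Suc k) p x"
        by simp
    qed
  qed
  have "((deriv ^^ k) (\<lambda>t. u t + p t)) differentiable (at x)" if x: "x \<in> U" for k x
  proof -
    obtain D1 where D1: "((deriv ^^ k) u has_real_derivative D1) (at x)"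
      using U(3)[OF x, of k] real_differentiable_def by blast
    obtain D2 where D2: "((deriv ^^ k) p has_real_derivative D2) (at x)"
      using pd[of k x] real_differentiable_def by blast
    have "((\<lambda>y. (deriv ^^ k) u y + (deriv ^^ k) p y) has_real_derivative D1 + D2) (at x)"
      using D1 D2 by (rule DERIV_add)
    then have "((deriv ^^ k) (\<lambda>t. u t + p t) has_real_derivative D1 + D2) (at x)"
      by (rule has_field_derivative_transform_within_open[OF _ U(1) x]) (use eq in auto)
    then show ?thesis using real_differentiable_def by blast
  qed
  then show ?thesis unfolding smooth_control_def using U(1,2) by blast
qed


definition P :: "(real \<Rightarrow> real) \<Rightarrow> real \<Rightarrow> real" where
  "P f t = integral {0..t} f"

lemma P_0[simp]: "P f 0 = 0" by (simp add: P_def)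

lemma P_deriv:
  assumes "continuous_on {0..T} f" "t \<in> {0..T}"
  shows "(P f has_real_derivative f t) (at t within {0..T})"
  unfolding P_def by (rule integral_has_real_derivative[OF assms])

lemma P_cont:
  assumes "continuous_on {0..T} f"
  shows "continuous_on {0..T} (P f)"
  unfolding P_def by (rule indefinite_integral_continuous_1[OF integrable_continuous_real[OF assms]])

lemma P_bound:
  assumes "continuous_on {0..T} f" "\<And>x. x \<in> {0..T} \<Longrightarrow> \<bar>f x\<bar> \<le> B" "t \<in> {0..T}"
  shows "\<bar>P f t\<bar> \<le> T * B"
proof -
  have B: "0 \<le> B" using assms(2)[of 0] assms(3) by auto
  have "norm (integral {0..t} f) \<le> B * (t - 0)"
    using assms by (intro integral_bound) (auto intro: continuous_on_subset)
  also have "\<dots> \<le> T * B" using assms(3) B by (auto intro: mult_left_mono simp: mult.commute)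
  finally show ?thesis by (simp add: P_def)
qed

lemma deriv_zero_const:
  assumes T: "0 \<le> T" and "\<And>t. t \<in> {0..T} \<Longrightarrow> (y has_real_derivative 0) (at t within {0..T})"
    and "t \<in> {0..T}"
  shows "y t = y 0"
proof -
  obtain c where "\<forall>x\<in>{0..T}. y x = c"
    using has_field_derivative_zero_constant[of "{0..T}" y] assms by auto
  then show ?thesis using assms T by auto
qed

lemma P_uniq:
  assumes T: "0 \<le> T" and g: "continuous_on {0..T} g"
    and d: "\<And>t. t \<in> {0..T} \<Longrightarrow> (y has_real_derivative g t) (at t within {0..T})"
    and t: "t \<in> {0..T}"
  shows "y t = y 0 + P g t"
proof -
  have "(\<lambda>t. y t - P g t) t = (\<lambda>t. y t - P g t) 0"
    by (rule deriv_zero_const[OF T _ t]) (use d P_deriv[OF g] DERIV_diff in fastforce)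
  then show ?thesis by simp
qed

lemma cont_bound:
  assumes "continuous_on {0..T} (f::real\<Rightarrow>real)"
  obtains M where "M \<ge> 1" "\<And>t. t \<in> {0..T} \<Longrightarrow> \<bar>f t\<bar> \<le> M"
proof -
  have "compact (f ` {0..T})" using assms by (intro compact_continuous_image) auto
  then obtain B where "\<forall>x\<in>f ` {0..T}. norm x \<le> B" using compact_imp_bounded bounded_iff by metis
  then show ?thesis using that[of "max 1 B"] by force
qed


lemma P_deriv'[derivative_intros]:
  assumes "continuous_on {0..T} f" "t \<in> {0..T}"
  shows "((\<lambda>x. P f x) has_real_derivative f t) (at t within {0..T})"
  using P_deriv[OF assms] by simp

lemmas P_cont'[continuous_intros] = P_cont

definition Yl :: "real \<Rightarrow> (real \<Rightarrow> real) \<Rightarrow> real \<Rightarrow> real" where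
  "Yl a U t = a + P U t"
definition Y3 :: "real \<Rightarrow> real \<Rightarrow> (real \<Rightarrow> real) \<Rightarrow> (real \<Rightarrow> real) \<Rightarrow> real \<Rightarrow> real" where
  "Y3 a2 a3 U1 U2 t = a3 + P (\<lambda>s. U1 s * Yl a2 U2 s) t"
definition Y4 :: "real \<Rightarrow> real \<Rightarrow> real \<Rightarrow> (real \<Rightarrow> real) \<Rightarrow> (real \<Rightarrow> real) \<Rightarrow> real \<Rightarrow> real" where
  "Y4 a2 a3 a4 U1 U2 t = a4 + P (\<lambda>s. U1 s * Y3 a2 a3 U1 U2 s) t"

lemma Yl_cont[continuous_intros]: "continuous_on {0..T} U \<Longrightarrow> continuous_on {0..T} (Yl a U)"
  unfolding Yl_def by (intro continuous_intros)
lemma Y3_cont[continuous_intros]: "continuous_on {0..T} U1 \<Longrightarrow> continuous_on {0..T} U2 \<Longrightarrow>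
   continuous_on {0..T} (Y3 a2 a3 U1 U2)"
  unfolding Y3_def by (intro continuous_intros)
lemma Y4_cont[continuous_intros]: "continuous_on {0..T} U1 \<Longrightarrow> continuous_on {0..T} U2 \<Longrightarrow>
   continuous_on {0..T} (Y4 a2 a3 a4 U1 U2)"
  unfolding Y4_def by (intro continuous_intros)

lemma Yl_deriv: "continuous_on {0..T} U \<Longrightarrow> t \<in> {0..T} \<Longrightarrow>
   (Yl a U has_real_derivative U t) (at t within {0..T})"
  unfolding Yl_def by (rule derivative_eq_intros | assumption | simp)+
lemma Y3_deriv: "continuous_on {0..T} U1 \<Longrightarrow> continuous_on {0..T} U2 \<Longrightarrow> t \<in> {0..T} \<Longrightarrow>
   (Y3 a2 a3 U1 U2 has_real_derivative U1 t * Yl a2 U2 t) (at t within {0..T})"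
  unfolding Y3_def by (rule derivative_eq_intros | assumption | simp | intro continuous_intros)+
lemma Y4_deriv: "continuous_on {0..T} U1 \<Longrightarrow> continuous_on {0..T} U2 \<Longrightarrow> t \<in> {0..T} \<Longrightarrow>
   (Y4 a2 a3 a4 U1 U2 has_real_derivative U1 t * Y3 a2 a3 U1 U2 t) (at t within {0..T})"
  unfolding Y4_def by (rule derivative_eq_intros | assumption | simp | intro continuous_intros)+

lemma Y_0[simp]: "Yl a U 0 = a" "Y3 a2 a3 U1 U2 0 = a3" "Y4 a2 a3 a4 U1 U2 0 = a4"
  by (simp_all add: Yl_def Y3_def Y4_def)

definition XY :: "real \<Rightarrow> real \<Rightarrow> real \<Rightarrow> real \<Rightarrow> (real \<Rightarrow> real) \<Rightarrow> (real \<Rightarrow> real) \<Rightarrow> real \<Rightarrow> real^4^4" where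
  "XY a1 a2 a3 a4 U1 U2 t = Mx (Yl a1 U1 t) (Yl a2 U2 t) (Y3 a2 a3 U1 U2 t) (Y4 a2 a3 a4 U1 U2 t)"

lemma XY_traj:
  assumes "continuous_on {0..T} U1" "continuous_on {0..T} U2"
  shows "trajectory T U1 U2 (XY a1 a2 a3 a4 U1 U2)"
  unfolding XY_def
  by (rule traj_build) (auto intro!: Yl_deriv Y3_deriv Y4_deriv assms)

lemma traj_is_XY:
  assumes T: "0 \<le> T" and tr: "trajectory T U1 U2 X" and X0: "X 0 = Mx a1 a2 a3 a4"
    and c: "continuous_on {0..T} U1" "continuous_on {0..T} U2"
    and t: "t \<in> {0..T}"
  shows "X t = XY a1 a2 a3 a4 U1 U2 t"
proof -
  let ?x1 = "\<lambda>t. X t $ 1 $ 2" and ?x2 = "\<lambda>t. X t $ 0 $ 1" and ?x3 = "\<lambda>t. X t $ 0 $ 2"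
    and ?x4 = "\<lambda>t. X t $ 0 $ 3"
  have i: "?x1 0 = a1" "?x2 0 = a2" "?x3 0 = a3" "?x4 0 = a4"
    by (simp_all add: X0 Mx_def mat4_nth)
  have e1: "?x1 s = Yl a1 U1 s" if "s \<in> {0..T}" for s
    using P_uniq[OF T c(1) traj_coords(2)[OF tr] that] i by (simp add: Yl_def)
  have e2: "?x2 s = Yl a2 U2 s" if "s \<in> {0..T}" for s
    using P_uniq[OF T c(2) traj_coords(3)[OF tr] that] i by (simp add: Yl_def)
  have c2: "continuous_on {0..T} (\<lambda>s. U1 s * Yl a2 U2 s)" using c by (intro continuous_intros)
  have e3: "?x3 s = Y3 a2 a3 U1 U2 s" if "s \<in> {0..T}" for s
  proof -
    have "?x3 s = ?x3 0 + P (\<lambda>s. U1 s * Yl a2 U2 s) s"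
      by (rule P_uniq[OF T c2 _ that]) (use traj_coords(4)[OF tr] e2 in simp)
    then show ?thesis using i by (simp add: Y3_def)
  qed
  have c3: "continuous_on {0..T} (\<lambda>s. U1 s * Y3 a2 a3 U1 U2 s)" using c by (intro continuous_intros)
  have e4: "?x4 s = Y4 a2 a3 a4 U1 U2 s" if "s \<in> {0..T}" for s
  proof -
    have "?x4 s = ?x4 0 + P (\<lambda>s. U1 s * Y3 a2 a3 U1 U2 s) s"
      by (rule P_uniq[OF T c3 _ that]) (use traj_coords(5)[OF tr] e3 in simp)
    then show ?thesis using i by (simp add: Y4_def)
  qed
  show ?thesis using traj_coords(1)[OF tr t] e1[OF t] e2[OF t] e3[OF t] e4[OF t]
    by (simp add: XY_def)
qed


lemma deriv_eqI: "(f has_real_derivative D) F \<Longrightarrow> D = D' \<Longrightarrow> (f has_real_derivative D') F"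
  by simp

definition l3 :: "real \<Rightarrow> (real \<Rightarrow> real) \<Rightarrow> (real \<Rightarrow> real) \<Rightarrow> (real \<Rightarrow> real) \<Rightarrow> (real \<Rightarrow> real) \<Rightarrow> real \<Rightarrow> real" where
  "l3 a2 U1 U2 b1 b2 t = P (\<lambda>s. b1 s * Yl a2 U2 s + U1 s * P b2 s) t"
definition l4 :: "real \<Rightarrow> real \<Rightarrow> (real \<Rightarrow> real) \<Rightarrow> (real \<Rightarrow> real) \<Rightarrow> (real \<Rightarrow> real) \<Rightarrow> (real \<Rightarrow> real) \<Rightarrow> real \<Rightarrow> real" where
  "l4 a2 a3 U1 U2 b1 b2 t = P (\<lambda>s. b1 s * Y3 a2 a3 U1 U2 s + U1 s * l3 a2 U1 U2 b1 b2 s) t"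

lemma l3_cont[continuous_intros]: "continuous_on {0..T} U1 \<Longrightarrow> continuous_on {0..T} U2 \<Longrightarrow>
  continuous_on {0..T} b1 \<Longrightarrow> continuous_on {0..T} b2 \<Longrightarrow> continuous_on {0..T} (l3 a2 U1 U2 b1 b2)"
  unfolding l3_def by (intro continuous_intros)
lemma l4_cont[continuous_intros]: "continuous_on {0..T} U1 \<Longrightarrow> continuous_on {0..T} U2 \<Longrightarrow>
  continuous_on {0..T} b1 \<Longrightarrow> continuous_on {0..T} b2 \<Longrightarrow> continuous_on {0..T} (l4 a2 a3 U1 U2 b1 b2)"
  unfolding l4_def by (intro continuous_intros)

lemma l3_deriv: "continuous_on {0..T} U1 \<Longrightarrow> continuous_on {0..T} U2 \<Longrightarrow>
  continuous_on {0..T} b1 \<Longrightarrow> continuous_on {0..T} b2 \<Longrightarrow> t \<in> {0..T} \<Longrightarrow>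
  (l3 a2 U1 U2 b1 b2 has_real_derivative b1 t * Yl a2 U2 t + U1 t * P b2 t) (at t within {0..T})"
  unfolding l3_def by (rule P_deriv) (intro continuous_intros; assumption)+
lemma l4_deriv: "continuous_on {0..T} U1 \<Longrightarrow> continuous_on {0..T} U2 \<Longrightarrow>
  continuous_on {0..T} b1 \<Longrightarrow> continuous_on {0..T} b2 \<Longrightarrow> t \<in> {0..T} \<Longrightarrow>
  (l4 a2 a3 U1 U2 b1 b2 has_real_derivative b1 t * Y3 a2 a3 U1 U2 t + U1 t * l3 a2 U1 U2 b1 b2 t) (at t within {0..T})"
  unfolding l4_def by (rule P_deriv) (intro continuous_intros; assumption)+

lemma l_0[simp]: "l3 a2 U1 U2 b1 b2 0 = 0" "l4 a2 a3 U1 U2 b1 b2 0 = 0"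
  by (simp_all add: l3_def l4_def)

context
  fixes T a2 a3 a4 :: real and U1 U2 b1 b2 :: "real \<Rightarrow> real"
  assumes T: "0 \<le> T"
    and cU1: "continuous_on {0..T} U1" and cU2: "continuous_on {0..T} U2"
    and cb1: "continuous_on {0..T} b1" and cb2: "continuous_on {0..T} b2"
begin

lemma cV1: "continuous_on {0..T} (\<lambda>t. U1 t + b1 t)" using cU1 cb1 by (intro continuous_intros)
lemma cV2: "continuous_on {0..T} (\<lambda>t. U2 t + b2 t)" using cU2 cb2 by (intro continuous_intros)

lemma exp_Yl:
  assumes "continuous_on {0..T} U" "continuous_on {0..T} b" "t \<in> {0..T}"
  shows "Yl a (\<lambda>t. U t + b t) t = Yl a U t + P b t"
proof -
  have "(\<lambda>t. Yl a U t + P b t) t = (\<lambda>t. Yl a U t + P b t) 0 + P (\<lambda>t. U t + b t) t"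
    by (rule P_uniq[OF T _ _ assms(3)]) (use assms in \<open>auto intro!: continuous_intros DERIV_add Yl_deriv P_deriv\<close>)
  then show ?thesis by (simp add: Yl_def)
qed

definition "rho3 t = P (\<lambda>s. b1 s * P b2 s) t"

lemma rho3_cont: "continuous_on {0..T} rho3"
  unfolding rho3_def using cb1 cb2 by (intro continuous_intros)

lemma exp_Y3:
  assumes t: "t \<in> {0..T}"
  shows "Y3 a2 a3 (\<lambda>t. U1 t + b1 t) (\<lambda>t. U2 t + b2 t) t = Y3 a2 a3 U1 U2 t + l3 a2 U1 U2 b1 b2 t + rho3 t"
proof -
  let ?q = "\<lambda>t. Y3 a2 a3 (\<lambda>t. U1 t + b1 t) (\<lambda>t. U2 t + b2 t) t - Y3 a2 a3 U1 U2 t - l3 a2 U1 U2 b1 b2 t"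
  have "?q t = ?q 0 + P (\<lambda>s. b1 s * P b2 s) t"
  proof (rule P_uniq[OF T _ _ t])
    show "continuous_on {0..T} (\<lambda>s. b1 s * P b2 s)" using cb1 cb2 by (intro continuous_intros)
    fix s assume s: "s \<in> {0..T}"
    show "(?q has_real_derivative b1 s * P b2 s) (at s within {0..T})"
      by (rule deriv_eqI[OF DERIV_diff[OF DERIV_diff[OF Y3_deriv[OF cV1 cV2 s] Y3_deriv[OF cU1 cU2 s]]
            l3_deriv[OF cU1 cU2 cb1 cb2 s]]])
        (simp add: exp_Yl[OF cU2 cb2 s] algebra_simps)
  qed
  then show ?thesis by (simp add: rho3_def)
qed

definition "rho4 t = P (\<lambda>s. U1 s * rho3 s + b1 s * (l3 a2 U1 U2 b1 b2 s + rho3 s)) t"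

lemma exp_Y4:
  assumes t: "t \<in> {0..T}"
  shows "Y4 a2 a3 a4 (\<lambda>t. U1 t + b1 t) (\<lambda>t. U2 t + b2 t) t = Y4 a2 a3 a4 U1 U2 t + l4 a2 a3 U1 U2 b1 b2 t + rho4 t"
proof -
  let ?q = "\<lambda>t. Y4 a2 a3 a4 (\<lambda>t. U1 t + b1 t) (\<lambda>t. U2 t + b2 t) t - Y4 a2 a3 a4 U1 U2 t - l4 a2 a3 U1 U2 b1 b2 t"
  have "?q t = ?q 0 + P (\<lambda>s. U1 s * rho3 s + b1 s * (l3 a2 U1 U2 b1 b2 s + rho3 s)) t"
  proof (rule P_uniq[OF T _ _ t])
    show "continuous_on {0..T} (\<lambda>s. U1 s * rho3 s + b1 s * (l3 a2 U1 U2 b1 b2 s + rho3 s))"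
      using cb1 cb2 cU1 cU2 rho3_cont by (intro continuous_intros)
    fix s assume s: "s \<in> {0..T}"
    show "(?q has_real_derivative U1 s * rho3 s + b1 s * (l3 a2 U1 U2 b1 b2 s + rho3 s)) (at s within {0..T})"
      by (rule deriv_eqI[OF DERIV_diff[OF DERIV_diff[OF Y4_deriv[OF cV1 cV2 s] Y4_deriv[OF cU1 cU2 s]]
            l4_deriv[OF cU1 cU2 cb1 cb2 s]]])
        (simp add: exp_Y3[OF s] algebra_simps)
  qed
  then show ?thesis by (simp add: rho4_def)
qed

end


lemma abs_mult_le: "\<bar>x\<bar> \<le> A \<Longrightarrow> \<bar>y\<bar> \<le> B \<Longrightarrow> \<bar>x * y\<bar> \<le> A * (B::real)"
  by (simp add: abs_mult mult_mono')

lemma abs_add_le: "\<bar>x\<bar> \<le> A \<Longrightarrow> \<bar>y\<bar> \<le> B \<Longrightarrow> \<bar>x + y\<bar> \<le> A + (B::real)"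
  by linarith

definition vec4 :: "real \<Rightarrow> real \<Rightarrow> real \<Rightarrow> real \<Rightarrow> real^4" where
  "vec4 a b c d = (\<chi> i. if i = 1 then a else if i = 2 then b else if i = 3 then c else d)"

lemma vec4_nth[simp]: "vec4 a b c d $ 1 = a" "vec4 a b c d $ 2 = b" "vec4 a b c d $ 3 = c" "vec4 a b c d $ 0 = d"
  by (simp_all add: vec4_def)

lemma vec4_add: "vec4 a b c d + vec4 a' b' c' d' = vec4 (a+a') (b+b') (c+c') (d+d')"
  by (simp add: vec_eq_iff vec4_def)
lemma vec4_diff: "vec4 a b c d - vec4 a' b' c' d' = vec4 (a-a') (b-b') (c-c') (d-d')"
  by (simp add: vec_eq_iff vec4_def)
lemma vec4_scale: "r *\<^sub>R vec4 a b c d = vec4 (r*a) (r*b) (r*c) (r*d)"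
  by (simp add: vec_eq_iff vec4_def)

lemma vec4_norm: "norm (vec4 a b c d) \<le> \<bar>a\<bar> + \<bar>b\<bar> + \<bar>c\<bar> + \<bar>d\<bar>"
  using norm_le_l1_cart[of "vec4 a b c d"] by (simp add: sum4)

lemma vec4_inner: "x \<bullet> vec4 a b c d = x$1 * a + x$2 * b + x$3 * c + x$0 * d"
  by (simp add: inner_vec_def sum4)

lemma vec4_eta: "vec4 (x$1) (x$2) (x$3) (x$0) = x"
  unfolding vec_eq_iff forall4 by simp

definition Evec where
  "Evec a1 a2 a3 a4 U1 U2 T = vec4 (Yl a1 U1 T) (Yl a2 U2 T) (Y3 a2 a3 U1 U2 T) (Y4 a2 a3 a4 U1 U2 T)"
definition Lin where
  "Lin a2 a3 U1 U2 b1 b2 T = vec4 (P b1 T) (P b2 T) (l3 a2 U1 U2 b1 b2 T) (l4 a2 a3 U1 U2 b1 b2 T)"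

lemma P_bound':
  assumes "0 \<le> T" "continuous_on {0..T} f" "\<And>x. x \<in> {0..T} \<Longrightarrow> \<bar>f x\<bar> \<le> B" "t \<in> {0..T}"
  shows "\<bar>P f t\<bar> \<le> T * B"
  using P_bound assms(2-4) by blast

lemma expansion:
  assumes T: "0 \<le> T" and cU1: "continuous_on {0..T} U1" and cU2: "continuous_on {0..T} U2"
  shows "\<exists>K\<ge>0. \<forall>b1 b2 \<beta>. continuous_on {0..T} b1 \<longrightarrow> continuous_on {0..T} b2 \<longrightarrow>
     (\<forall>t\<in>{0..T}. \<bar>b1 t\<bar> \<le> \<beta> \<and> \<bar>b2 t\<bar> \<le> \<beta>) \<longrightarrow> \<beta> \<le> 1 \<longrightarrow>
     norm (Evec a1 a2 a3 a4 (\<lambda>t. U1 t + b1 t) (\<lambda>t. U2 t + b2 t) T - Evec a1 a2 a3 a4 U1 U2 T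
        - Lin a2 a3 U1 U2 b1 b2 T) \<le> K * \<beta>^2 \<and> norm (Lin a2 a3 U1 U2 b1 b2 T) \<le> K * \<beta>"
proof -
  obtain M1 where M1: "\<And>t. t \<in> {0..T} \<Longrightarrow> \<bar>U1 t\<bar> \<le> M1" "M1 \<ge> 1" using cont_bound[OF cU1] by blast
  obtain M2 where M2: "\<And>t. t \<in> {0..T} \<Longrightarrow> \<bar>Yl a2 U2 t\<bar> \<le> M2" "M2 \<ge> 1"
    using cont_bound[OF Yl_cont[OF cU2]] by blast
  obtain M3 where M3: "\<And>t. t \<in> {0..T} \<Longrightarrow> \<bar>Y3 a2 a3 U1 U2 t\<bar> \<le> M3" "M3 \<ge> 1"
    using cont_bound[OF Y3_cont[OF cU1 cU2]] by blast
  define M where "M = M1 + M2 + M3"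
  have MU: "\<bar>U1 t\<bar> \<le> M" "\<bar>Yl a2 U2 t\<bar> \<le> M" "\<bar>Y3 a2 a3 U1 U2 t\<bar> \<le> M" if "t \<in> {0..T}" for t
    using M1 M2 M3 that unfolding M_def by force+
  have M0: "M \<ge> 0" using M1 M2 M3 by (simp add: M_def)
  define Kl where "Kl = T + T + T*(M + M*T) + T*(M + M*(T*(M + M*T)))"
  define Kq where "Kq = T*T + (T*(M*(T*T)) + T*(T*(M + M*T)) + T*(T*T))"
  have Kl0: "Kl \<ge> 0" and Kq0: "Kq \<ge> 0" using T M0 by (simp_all add: Kl_def Kq_def)
  show ?thesis
  proof (intro exI[of _ "Kl + Kq"] conjI allI impI)
    show "0 \<le> Kl + Kq" using Kl0 Kq0 by simp
    fix b1 b2 and \<beta> :: real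
    assume cb1: "continuous_on {0..T} b1" and cb2: "continuous_on {0..T} b2"
      and bb: "\<forall>t\<in>{0..T}. \<bar>b1 t\<bar> \<le> \<beta> \<and> \<bar>b2 t\<bar> \<le> \<beta>" and b1': "\<beta> \<le> 1"
    have Tin: "T \<in> {0..T}" using T by simp
    have b0: "\<beta> \<ge> 0" using bb T by force
    have Pb1: "\<bar>P b1 t\<bar> \<le> T * \<beta>" if "t \<in> {0..T}" for t
      by (rule P_bound'[OF T cb1 _ that]) (use bb in auto)
    have Pb2: "\<bar>P b2 t\<bar> \<le> T * \<beta>" if "t \<in> {0..T}" for t
      by (rule P_bound'[OF T cb2 _ that]) (use bb in auto)
    have r3: "\<bar>P (\<lambda>s. b1 s * P b2 s) t\<bar> \<le> T * (\<beta> * (T * \<beta>))" if "t \<in> {0..T}" for t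
      by (rule P_bound'[OF T _ _ that]) (use bb Pb2 cb1 cb2 in \<open>auto intro!: continuous_intros abs_mult_le\<close>)
    have L3: "\<bar>l3 a2 U1 U2 b1 b2 t\<bar> \<le> T * (\<beta> * M + M * (T * \<beta>))" if "t \<in> {0..T}" for t
      unfolding l3_def
      by (rule P_bound'[OF T _ _ that]) (use bb Pb2 MU cb1 cb2 cU1 cU2 in \<open>auto intro!: continuous_intros abs_mult_le abs_add_le\<close>)
    have L4: "\<bar>l4 a2 a3 U1 U2 b1 b2 t\<bar> \<le> T * (\<beta> * M + M * (T * (\<beta> * M + M * (T * \<beta>))))" if "t \<in> {0..T}" for t
      unfolding l4_def
      by (rule P_bound'[OF T _ _ that]) (use bb L3 MU cb1 cb2 cU1 cU2 in \<open>auto intro!: continuous_intros abs_mult_le abs_add_le\<close>)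
    have r4: "\<bar>P (\<lambda>s. U1 s * P (\<lambda>s. b1 s * P b2 s) s + b1 s * (l3 a2 U1 U2 b1 b2 s + P (\<lambda>s. b1 s * P b2 s) s)) t\<bar>
       \<le> T * (M * (T * (\<beta> * (T * \<beta>))) + \<beta> * (T * (\<beta> * M + M * (T * \<beta>)) + T * (\<beta> * (T * \<beta>))))"
      if "t \<in> {0..T}" for t
      by (rule P_bound'[OF T _ _ that]) (use bb L3 r3 MU cb1 cb2 cU1 cU2 in \<open>auto intro!: continuous_intros abs_mult_le abs_add_le\<close>)
    have eq: "Evec a1 a2 a3 a4 (\<lambda>t. U1 t + b1 t) (\<lambda>t. U2 t + b2 t) T - Evec a1 a2 a3 a4 U1 U2 T
        - Lin a2 a3 U1 U2 b1 b2 T = vec4 0 0 (P (\<lambda>s. b1 s * P b2 s) T)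
          (P (\<lambda>s. U1 s * P (\<lambda>s. b1 s * P b2 s) s + b1 s * (l3 a2 U1 U2 b1 b2 s + P (\<lambda>s. b1 s * P b2 s) s)) T)"
      unfolding Evec_def Lin_def vec4_diff
      using exp_Yl[OF T cU1 cU2 cb1 cb2 cU1 cb1 Tin] exp_Yl[OF T cU1 cU2 cb1 cb2 cU2 cb2 Tin]
        exp_Y3[OF T cU1 cU2 cb1 cb2 Tin, of a2 a3] exp_Y4[OF T cU1 cU2 cb1 cb2 Tin, of a2 a3 a4]
      by (simp add: rho3_def[OF T cU1 cU2 cb1 cb2] rho4_def[OF T cU1 cU2 cb1 cb2])
    have "norm (vec4 0 0 (P (\<lambda>s. b1 s * P b2 s) T)
          (P (\<lambda>s. U1 s * P (\<lambda>s. b1 s * P b2 s) s + b1 s * (l3 a2 U1 U2 b1 b2 s + P (\<lambda>s. b1 s * P b2 s) s)) T))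
       \<le> T * (\<beta> * (T * \<beta>)) + T * (M * (T * (\<beta> * (T * \<beta>))) + \<beta> * (T * (\<beta> * M + M * (T * \<beta>)) + T * (\<beta> * (T * \<beta>))))"
      by (rule order_trans[OF vec4_norm]) (use r3[OF Tin] r4[OF Tin] in simp)
    also have "\<dots> \<le> Kq * \<beta>^2"
    proof -
      have "\<beta>^3 \<le> \<beta>^2" using b0 b1' by (simp add: power_decreasing)
      then have "T*(T*T) * \<beta>^3 \<le> T*(T*T) * \<beta>^2" using T by (simp add: mult_left_mono)
      then show ?thesis unfolding Kq_def by (simp add: algebra_simps power2_eq_square power3_eq_cube)
    qed
    also have "\<dots> \<le> (Kl + Kq) * \<beta>^2" using Kl0 by (simp add: mult_right_mono)
    finally show "norm (Evec a1 a2 a3 a4 (\<lambda>t. U1 t + b1 t) (\<lambda>t. U2 t + b2 t) T - Evec a1 a2 a3 a4 U1 U2 T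
        - Lin a2 a3 U1 U2 b1 b2 T) \<le> (Kl + Kq) * \<beta>^2" unfolding eq .
    have "norm (Lin a2 a3 U1 U2 b1 b2 T) \<le> T * \<beta> + T * \<beta> + T * (\<beta> * M + M * (T * \<beta>)) +
        T * (\<beta> * M + M * (T * (\<beta> * M + M * (T * \<beta>))))"
      unfolding Lin_def using vec4_norm Pb1[OF Tin] Pb2[OF Tin] L3[OF Tin] L4[OF Tin]
      by (smt (verit))
    also have "\<dots> = Kl * \<beta>" unfolding Kl_def by (simp add: algebra_simps)
    also have "\<dots> \<le> (Kl + Kq) * \<beta>" using Kq0 b0 by (simp add: mult_right_mono)
    finally show "norm (Lin a2 a3 U1 U2 b1 b2 T) \<le> (Kl + Kq) * \<beta>" .
  qed
qed


lemma P_lin: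
  assumes T: "0 \<le> T" and f: "continuous_on {0..T} f" and g: "continuous_on {0..T} g" and t: "t \<in> {0..T}"
  shows "P (\<lambda>s. c * f s + d * g s) t = c * P f t + d * P g t"
proof -
  have "(\<lambda>t. c * P f t + d * P g t) t = (\<lambda>t. c * P f t + d * P g t) 0 + P (\<lambda>s. c * f s + d * g s) t"
    by (rule P_uniq[OF T _ _ t]) (use f g in \<open>auto intro!: continuous_intros derivative_eq_intros\<close>)
  then show ?thesis by simp
qed

context
  fixes T a2 a3 :: real and U1 U2 f1 f2 g1 g2 :: "real \<Rightarrow> real" and c d :: real
  assumes T: "0 \<le> T"
    and cU1: "continuous_on {0..T} U1" and cU2: "continuous_on {0..T} U2"
    and cf1: "continuous_on {0..T} f1" and cf2: "continuous_on {0..T} f2"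
    and cg1: "continuous_on {0..T} g1" and cg2: "continuous_on {0..T} g2"
begin

lemma ch1: "continuous_on {0..T} (\<lambda>s. c * f1 s + d * g1 s)" using cf1 cg1 by (intro continuous_intros)
lemma ch2: "continuous_on {0..T} (\<lambda>s. c * f2 s + d * g2 s)" using cf2 cg2 by (intro continuous_intros)

lemma l3_lin:
  assumes t: "t \<in> {0..T}"
  shows "l3 a2 U1 U2 (\<lambda>s. c * f1 s + d * g1 s) (\<lambda>s. c * f2 s + d * g2 s) t
     = c * l3 a2 U1 U2 f1 f2 t + d * l3 a2 U1 U2 g1 g2 t"
proof -
  have "(\<lambda>t. c * l3 a2 U1 U2 f1 f2 t + d * l3 a2 U1 U2 g1 g2 t) t =
     (\<lambda>t. c * l3 a2 U1 U2 f1 f2 t + d * l3 a2 U1 U2 g1 g2 t) 0 +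
     P (\<lambda>s. (c * f1 s + d * g1 s) * Yl a2 U2 s + U1 s * P (\<lambda>s. c * f2 s + d * g2 s) s) t"
  proof (rule P_uniq[OF T _ _ t])
    show "continuous_on {0..T} (\<lambda>s. (c * f1 s + d * g1 s) * Yl a2 U2 s + U1 s * P (\<lambda>s. c * f2 s + d * g2 s) s)"
      using cU1 cU2 cf1 cf2 cg1 cg2 by (intro continuous_intros)
    fix s assume s: "s \<in> {0..T}"
    show "((\<lambda>t. c * l3 a2 U1 U2 f1 f2 t + d * l3 a2 U1 U2 g1 g2 t) has_real_derivative
      (c * f1 s + d * g1 s) * Yl a2 U2 s + U1 s * P (\<lambda>s. c * f2 s + d * g2 s) s) (at s within {0..T})"
      by (rule deriv_eqI[OF DERIV_add[OF DERIV_cmult[OF l3_deriv[OF cU1 cU2 cf1 cf2 s]]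
          DERIV_cmult[OF l3_deriv[OF cU1 cU2 cg1 cg2 s]]]])
        (simp add: P_lin[OF T cf2 cg2 s] algebra_simps)
  qed
  then show ?thesis by (simp add: l3_def)
qed

lemma l4_lin:
  assumes t: "t \<in> {0..T}"
  shows "l4 a2 a3 U1 U2 (\<lambda>s. c * f1 s + d * g1 s) (\<lambda>s. c * f2 s + d * g2 s) t
     = c * l4 a2 a3 U1 U2 f1 f2 t + d * l4 a2 a3 U1 U2 g1 g2 t"
proof -
  have "(\<lambda>t. c * l4 a2 a3 U1 U2 f1 f2 t + d * l4 a2 a3 U1 U2 g1 g2 t) t =
     (\<lambda>t. c * l4 a2 a3 U1 U2 f1 f2 t + d * l4 a2 a3 U1 U2 g1 g2 t) 0 +
     P (\<lambda>s. (c * f1 s + d * g1 s) * Y3 a2 a3 U1 U2 s + U1 s * l3 a2 U1 U2 (\<lambda>s. c * f1 s + d * g1 s) (\<lambda>s. c * f2 s + d * g2 s) s) t"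
  proof (rule P_uniq[OF T _ _ t])
    show "continuous_on {0..T} (\<lambda>s. (c * f1 s + d * g1 s) * Y3 a2 a3 U1 U2 s + U1 s * l3 a2 U1 U2 (\<lambda>s. c * f1 s + d * g1 s) (\<lambda>s. c * f2 s + d * g2 s) s)"
      using cU1 cU2 cf1 cf2 cg1 cg2 by (intro continuous_intros)
    fix s assume s: "s \<in> {0..T}"
    show "((\<lambda>t. c * l4 a2 a3 U1 U2 f1 f2 t + d * l4 a2 a3 U1 U2 g1 g2 t) has_real_derivative
      (c * f1 s + d * g1 s) * Y3 a2 a3 U1 U2 s + U1 s * l3 a2 U1 U2 (\<lambda>s. c * f1 s + d * g1 s) (\<lambda>s. c * f2 s + d * g2 s) s) (at s within {0..T})"
      by (rule deriv_eqI[OF DERIV_add[OF DERIV_cmult[OF l4_deriv[OF cU1 cU2 cf1 cf2 s]]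
          DERIV_cmult[OF l4_deriv[OF cU1 cU2 cg1 cg2 s]]]])
        (simp add: l3_lin[OF s] algebra_simps)
  qed
  then show ?thesis by (simp add: l4_def)
qed

lemma Lin_lin:
  "Lin a2 a3 U1 U2 (\<lambda>s. c * f1 s + d * g1 s) (\<lambda>s. c * f2 s + d * g2 s) T
     = c *\<^sub>R Lin a2 a3 U1 U2 f1 f2 T + d *\<^sub>R Lin a2 a3 U1 U2 g1 g2 T"
  using T unfolding Lin_def vec4_scale vec4_add
  by (simp add: P_lin[OF T cf1 cg1] P_lin[OF T cf2 cg2] l3_lin l4_lin)

end

definition pp3 :: "real^4 \<Rightarrow> (real \<Rightarrow> real) \<Rightarrow> real \<Rightarrow> real \<Rightarrow> real" where
  "pp3 lam U1 T t = lam$3 + lam$0 * (P U1 T - P U1 t)"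
definition pp2 :: "real^4 \<Rightarrow> (real \<Rightarrow> real) \<Rightarrow> real \<Rightarrow> real \<Rightarrow> real" where
  "pp2 lam U1 T t = lam$2 + (P (\<lambda>s. pp3 lam U1 T s * U1 s) T - P (\<lambda>s. pp3 lam U1 T s * U1 s) t)"
definition gg1 where
  "gg1 lam a2 a3 U1 U2 T t = lam$1 + pp3 lam U1 T t * Yl a2 U2 t + lam$0 * Y3 a2 a3 U1 U2 t"

lemma pp3_cont[continuous_intros]: "continuous_on {0..T} U1 \<Longrightarrow> continuous_on {0..T} (pp3 lam U1 T)"
  unfolding pp3_def by (intro continuous_intros)
lemma pp2_cont[continuous_intros]: "continuous_on {0..T} U1 \<Longrightarrow> continuous_on {0..T} (pp2 lam U1 T)"
  unfolding pp2_def by (intro continuous_intros)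
lemma gg1_cont[continuous_intros]: "continuous_on {0..T} U1 \<Longrightarrow> continuous_on {0..T} U2 \<Longrightarrow>
  continuous_on {0..T} (gg1 lam a2 a3 U1 U2 T)"
  unfolding gg1_def by (intro continuous_intros)

lemma pp3_deriv: "continuous_on {0..T} U1 \<Longrightarrow> t \<in> {0..T} \<Longrightarrow>
   (pp3 lam U1 T has_real_derivative - (lam$0 * U1 t)) (at t within {0..T})"
  unfolding pp3_def by (rule derivative_eq_intros | assumption | simp)+
lemma pp2_deriv: "continuous_on {0..T} U1 \<Longrightarrow> t \<in> {0..T} \<Longrightarrow>
   (pp2 lam U1 T has_real_derivative - (pp3 lam U1 T t * U1 t)) (at t within {0..T})"
  unfolding pp2_def by (rule derivative_eq_intros | assumption | simp | intro continuous_intros)+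

lemma pp_T: "0 \<le> T \<Longrightarrow> pp3 lam U1 T T = lam$3" "0 \<le> T \<Longrightarrow> pp2 lam U1 T T = lam$2"
  by (simp_all add: pp3_def pp2_def)

lemma costate:
  assumes T: "0 \<le> T" and cU1: "continuous_on {0..T} U1" and cU2: "continuous_on {0..T} U2"
    and cb1: "continuous_on {0..T} b1" and cb2: "continuous_on {0..T} b2"
  shows "lam \<bullet> Lin a2 a3 U1 U2 b1 b2 T =
     P (\<lambda>t. gg1 lam a2 a3 U1 U2 T t * b1 t + pp2 lam U1 T t * b2 t) T"
proof -
  let ?F = "\<lambda>t. lam$1 * P b1 t + pp2 lam U1 T t * P b2 t + pp3 lam U1 T t * l3 a2 U1 U2 b1 b2 t
     + lam$0 * l4 a2 a3 U1 U2 b1 b2 t"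
  have Tin: "T \<in> {0..T}" using T by simp
  have "?F T = ?F 0 + P (\<lambda>t. gg1 lam a2 a3 U1 U2 T t * b1 t + pp2 lam U1 T t * b2 t) T"
  proof (rule P_uniq[OF T _ _ Tin])
    show "continuous_on {0..T} (\<lambda>t. gg1 lam a2 a3 U1 U2 T t * b1 t + pp2 lam U1 T t * b2 t)"
      using cU1 cU2 cb1 cb2 by (intro continuous_intros)
    fix s assume s: "s \<in> {0..T}"
    show "(?F has_real_derivative gg1 lam a2 a3 U1 U2 T s * b1 s + pp2 lam U1 T s * b2 s) (at s within {0..T})"
      by (rule deriv_eqI[OF DERIV_add[OF DERIV_add[OF DERIV_add[OF DERIV_cmult[OF P_deriv[OF cb1 s]]
          DERIV_mult[OF pp2_deriv[OF cU1 s] P_deriv[OF cb2 s]]]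
          DERIV_mult[OF pp3_deriv[OF cU1 s] l3_deriv[OF cU1 cU2 cb1 cb2 s]]]
          DERIV_cmult[OF l4_deriv[OF cU1 cU2 cb1 cb2 s]]]])
        (simp add: gg1_def algebra_simps)
  qed
  then show ?thesis
    by (simp add: Lin_def vec4_inner pp_T[OF T] algebra_simps)
qed


lemma P_add: "0 \<le> T \<Longrightarrow> continuous_on {0..T} f \<Longrightarrow> continuous_on {0..T} g \<Longrightarrow> t \<in> {0..T} \<Longrightarrow>
  P (\<lambda>s. f s + g s) t = P f t + P g t"
  using P_lin[of T f g t 1 1] by simp

lemma P_cmult: "P (\<lambda>s. c * f s) t = c * P f t"
  by (simp add: P_def)

lemma P_cong: "(\<And>s. s \<in> {0..t} \<Longrightarrow> f s = g s) \<Longrightarrow> P f t = P g t"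
  unfolding P_def by (rule integral_cong) auto

lemma sq_int_zero:
  assumes T: "0 < T" and h: "continuous_on {0..T} h" and le: "P (\<lambda>t. h t * h t) T \<le> 0"
    and t: "t \<in> {0..T}"
  shows "h t = 0"
proof -
  have ch: "continuous_on {0..T} (\<lambda>t. h t * h t)" using h by (intro continuous_intros)
  have "P (\<lambda>t. h t * h t) T \<ge> 0" unfolding P_def
    by (rule integral_nonneg) (auto intro: integrable_continuous_real[OF ch])
  with le have "P (\<lambda>t. h t * h t) T = 0" by simp
  then have "((\<lambda>t. h t * h t) has_integral 0) (cbox 0 T)"
    using integrable_continuous_real[OF ch] unfolding P_def by (simp add: has_integral_integral)
  then have "h t * h t = 0"
    by (rule has_integral_0_cbox_imp_0[rotated 2]) (use ch T t in auto)
  then show ?thesis by simp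
qed

lemma fund_lemma:
  assumes T: "0 < T" and h: "continuous_on {0..T} h"
    and orth: "\<And>p. real_polynomial_function p \<Longrightarrow> P (\<lambda>t. h t * p t) T = 0"
    and t: "t \<in> {0..T}"
  shows "h t = 0"
proof (rule sq_int_zero[OF T h _ t])
  obtain M where M: "\<And>t. t \<in> {0..T} \<Longrightarrow> \<bar>h t\<bar> \<le> M" "M \<ge> 1" using cont_bound[OF h] by blast
  have "P (\<lambda>t. h t * h t) T \<le> T * M * e" if e: "e > 0" for e
  proof -
    obtain q where q: "real_polynomial_function q" "\<And>x. x \<in> {0..T} \<Longrightarrow> \<bar>h x - q x\<bar> < e"
      using Stone_Weierstrass_real_polynomial_function[OF compact_Icc h e] by blast
    have cq: "continuous_on {0..T} q"
      by (rule continuous_on_polymonial_function) (simp add: q(1) real_polynomial_function_eq[symmetric])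
    have "P (\<lambda>t. h t * h t) T = P (\<lambda>t. h t * (h t - q t) + h t * q t) T"
      by (simp add: algebra_simps)
    also have "\<dots> = P (\<lambda>t. h t * (h t - q t)) T + P (\<lambda>t. h t * q t) T"
      by (rule P_add[of T]) (use T h cq in \<open>auto intro!: continuous_intros\<close>)
    also have "\<dots> = P (\<lambda>t. h t * (h t - q t)) T" using orth[OF q(1)] by simp
    also have "\<dots> \<le> \<bar>P (\<lambda>t. h t * (h t - q t)) T\<bar>" by simp
    also have "\<dots> \<le> T * (M * e)"
    proof (rule P_bound)
      show "\<bar>h x * (h x - q x)\<bar> \<le> M * e" if "x \<in> {0..T}" for x
        using abs_mult_le[OF M(1)[OF that] less_imp_le[OF q(2)[OF that]]] .
    qed (use T h cq in \<open>auto intro!: continuous_intros\<close>)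
    finally show ?thesis by simp
  qed
  then show "P (\<lambda>t. h t * h t) T \<le> 0"
  proof -
    assume H: "\<And>e. e > 0 \<Longrightarrow> P (\<lambda>t. h t * h t) T \<le> T * M * e"
    have TM: "T * M > 0" using T M(2) by simp
    show ?thesis
    proof (rule ccontr)
      assume "\<not> ?thesis"
      then have pos: "P (\<lambda>t. h t * h t) T > 0" by simp
      have "P (\<lambda>t. h t * h t) T \<le> T * M * (P (\<lambda>t. h t * h t) T / (2 * (T * M)))"
        using H[of "P (\<lambda>t. h t * h t) T / (2 * (T * M))"] pos TM by simp
      also have "\<dots> = P (\<lambda>t. h t * h t) T / 2" using TM by (auto simp: field_simps)
      finally show False using pos by simp
    qed
  qed
qed


lemma lagrange_abs:
  fixes Phi :: "real \<Rightarrow> real^4 \<Rightarrow> real^4" and Cst :: "real \<Rightarrow> real^4 \<Rightarrow> real"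
    and c :: real and dd :: "real^4"
  assumes cont: "\<And>s. continuous_on UNIV (Phi s)"
    and K: "K \<ge> 0" and \<delta>: "\<delta> > 0"
    and exPhi: "\<And>s e. \<bar>s\<bar> \<le> \<delta> \<Longrightarrow> norm e \<le> \<delta> \<Longrightarrow> norm (Phi s e - Phi 0 0 - e) \<le> K * (\<bar>s\<bar> + norm e)^2"
    and exC: "\<And>s e. \<bar>s\<bar> \<le> \<delta> \<Longrightarrow> norm e \<le> \<delta> \<Longrightarrow> \<bar>Cst s e - Cst 0 0 - s * c - dd \<bullet> e\<bar> \<le> K * (\<bar>s\<bar> + norm e)^2"
    and opt: "\<And>s e. Phi s e = Phi 0 0 \<Longrightarrow> Cst 0 0 \<le> Cst s e"
  shows "c = 0"
proof -
  define A where "A = 4 * K * (norm dd + 1)"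
  have A0: "A \<ge> 0" using K by (simp add: A_def)
  define s0 where "s0 = min \<delta> (1 / (4 * K + 1))"
  have s0: "s0 > 0" using \<delta> K by (simp add: s0_def)
  have key: "s * c + A * s^2 \<ge> 0" if s: "\<bar>s\<bar> \<le> s0" for s
  proof -
    define r where "r = 4 * K * s^2"
    have r0: "r \<ge> 0" using K by (simp add: r_def)
    have "4 * K * \<bar>s\<bar> \<le> 1"
    proof -
      have "\<bar>s\<bar> \<le> 1 / (4 * K + 1)" using s by (simp add: s0_def)
      moreover have "4 * K + 1 > 0" using K by simp
      ultimately have "\<bar>s\<bar> * (4 * K + 1) \<le> 1" by (simp add: le_divide_eq)
      then have "4 * K * \<bar>s\<bar> + \<bar>s\<bar> \<le> 1" by (simp add: algebra_simps)
      then show ?thesis by linarith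
    qed
    then have "(4 * K * \<bar>s\<bar>) * \<bar>s\<bar> \<le> 1 * \<bar>s\<bar>"
      by (rule mult_right_mono) simp
    moreover have "(4 * K * \<bar>s\<bar>) * \<bar>s\<bar> = r"
      unfolding r_def by (metis abs_mult_self_eq mult.assoc power2_eq_square)
    ultimately have rs: "r \<le> \<bar>s\<bar>" by simp
    have sd: "\<bar>s\<bar> \<le> \<delta>" using s by (simp add: s0_def)
    let ?f = "\<lambda>e. e - (Phi s e - Phi 0 0)"
    obtain e where e: "e \<in> cball 0 r" "?f e = e"
    proof (rule brouwer[of "cball (0::real^4) r" ?f])
      show "compact (cball (0::real^4) r)" "convex (cball (0::real^4) r)" by auto
      show "cball (0::real^4) r \<noteq> {}" using r0 by simp
      show "continuous_on (cball 0 r) ?f"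
        by (intro continuous_intros continuous_on_subset[OF cont[of s]]) auto
      show "?f \<in> cball 0 r \<rightarrow> cball 0 r"
      proof
        fix e assume "e \<in> cball (0::real^4) r"
        then have ne: "norm e \<le> r" by simp
        have "norm (?f e) = norm (Phi s e - Phi 0 0 - e)"
          by (metis minus_diff_eq norm_minus_cancel)
        also have "\<dots> \<le> K * (\<bar>s\<bar> + norm e)^2" using exPhi[OF sd] ne rs sd by simp
        also have "\<dots> \<le> K * (2 * \<bar>s\<bar>)^2"
          using K ne rs by (intro mult_left_mono power_mono) auto
        also have "\<dots> = r" by (simp add: r_def power2_eq_square)
        finally show "?f e \<in> cball 0 r" by simp
      qed
    qed
    have ne: "norm e \<le> r" using e(1) by simp
    have "Phi s e = Phi 0 0" using e(2) by simp
    then have "0 \<le> Cst s e - Cst 0 0" using opt by simp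
    also have "\<dots> \<le> s * c + dd \<bullet> e + K * (\<bar>s\<bar> + norm e)^2"
    proof -
      have "norm e \<le> \<delta>" using ne rs sd by linarith
      from exC[OF sd this] show ?thesis by (simp add: abs_le_iff)
    qed
    also have "\<dots> \<le> s * c + norm dd * r + K * (2 * \<bar>s\<bar>)^2"
    proof -
      have "dd \<bullet> e \<le> norm dd * norm e" by (rule norm_cauchy_schwarz)
      also have "\<dots> \<le> norm dd * r" using ne by (simp add: mult_left_mono)
      finally have 1: "dd \<bullet> e \<le> norm dd * r" .
      have 2: "K * (\<bar>s\<bar> + norm e)^2 \<le> K * (2 * \<bar>s\<bar>)^2"
        using K ne rs by (intro mult_left_mono power_mono) auto
      show ?thesis using 1 2 by simp
    qed
    also have "\<dots> = s * c + A * s^2" by (simp add: r_def A_def power2_eq_square algebra_simps)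
    finally show ?thesis .
  qed
  show "c = 0"
  proof (rule ccontr)
    assume c: "c \<noteq> 0"
    define \<sigma> where "\<sigma> = min s0 (\<bar>c\<bar> / (A + 1))"
    have \<sigma>0: "\<sigma> > 0" using s0 c A0 by (simp add: \<sigma>_def)
    define s where "s = - sgn c * \<sigma>"
    have sabs: "\<bar>s\<bar> = \<sigma>" using c \<sigma>0 by (simp add: s_def abs_mult)
    have "s * c = - \<sigma> * \<bar>c\<bar>" by (simp add: s_def abs_sgn mult.commute mult.left_commute)
    moreover have "s^2 = \<sigma>^2" using sabs by (metis power2_abs)
    moreover have "\<bar>s\<bar> \<le> s0" using sabs by (simp add: \<sigma>_def)
    ultimately have "- \<sigma> * \<bar>c\<bar> + A * \<sigma>^2 \<ge> 0" using key[of s] by simp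
    then have "\<sigma> * (A * \<sigma>) \<ge> \<sigma> * \<bar>c\<bar>" by (simp add: power2_eq_square algebra_simps)
    then have "A * \<sigma> \<ge> \<bar>c\<bar>" using \<sigma>0 by simp
    moreover have "\<sigma> * (A + 1) \<le> \<bar>c\<bar>"
    proof -
      have "\<sigma> \<le> \<bar>c\<bar> / (A + 1)" by (simp add: \<sigma>_def)
      moreover have "A + 1 > 0" using A0 by simp
      ultimately show ?thesis by (simp add: le_divide_eq)
    qed
    ultimately show False using \<sigma>0 by (simp add: algebra_simps)
  qed
qed


lemma lip_cont:
  fixes f :: "real^4 \<Rightarrow> real^4"
  assumes H: "\<And>e0. \<exists>L d. d > 0 \<and> (\<forall>e. norm (e - e0) \<le> d \<longrightarrow> norm (f e - f e0) \<le> L * norm (e - e0))"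
  shows "continuous_on UNIV f"
  unfolding continuous_on_iff
proof (intro ballI allI impI)
  fix x :: "real^4" and \<epsilon> :: real assume \<epsilon>: "\<epsilon> > 0"
  obtain L d where d: "d > 0" and Ld: "\<And>e. norm (e - x) \<le> d \<Longrightarrow> norm (f e - f x) \<le> L * norm (e - x)"
    using H[of x] by blast
  define \<delta> where "\<delta> = min d (\<epsilon> / (\<bar>L\<bar> + 1))"
  have \<delta>: "\<delta> > 0" using d \<epsilon> by (simp add: \<delta>_def)
  show "\<exists>\<delta>>0. \<forall>x'\<in>UNIV. dist x' x < \<delta> \<longrightarrow> dist (f x') (f x) < \<epsilon>"
  proof (intro exI[of _ \<delta>] conjI ballI impI \<delta>)
    fix x' assume "dist x' x < \<delta>"
    then have n: "norm (x' - x) < \<delta>" by (simp add: dist_norm)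
    then have "norm (f x' - f x) \<le> L * norm (x' - x)" using Ld \<delta>_def by simp
    also have "\<dots> \<le> (\<bar>L\<bar> + 1) * norm (x' - x)"
      by (intro mult_right_mono) auto
    also have "\<dots> < (\<bar>L\<bar> + 1) * (\<epsilon> / (\<bar>L\<bar> + 1))"
      using n by (intro mult_strict_left_mono) (auto simp: \<delta>_def)
    also have "\<dots> = \<epsilon>" by simp
    finally show "dist (f x') (f x) < \<epsilon>" by (simp add: dist_norm)
  qed
qed

lemma rpf_cont: "real_polynomial_function p \<Longrightarrow> continuous_on S p"
  by (rule continuous_on_polymonial_function) (simp add: real_polynomial_function_eq[symmetric])

lemma cost_exp:
  assumes T: "0 \<le> T" and c: "continuous_on {0..T} U1" "continuous_on {0..T} U2"
    "continuous_on {0..T} b1" "continuous_on {0..T} b2"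
  shows "cost c1 c2 T (\<lambda>t. U1 t + b1 t) (\<lambda>t. U2 t + b2 t) = cost c1 c2 T U1 U2
     + P (\<lambda>t. c1 * U1 t * b1 t + c2 * U2 t * b2 t) T + 1/2 * P (\<lambda>t. c1 * (b1 t)^2 + c2 * (b2 t)^2) T"
proof -
  have Tin: "T \<in> {0..T}" using T by simp
  have "cost c1 c2 T (\<lambda>t. U1 t + b1 t) (\<lambda>t. U2 t + b2 t) =
     1/2 * P (\<lambda>t. (c1 * (U1 t)^2 + c2 * (U2 t)^2) + ((\<lambda>t. 2 * (c1 * U1 t * b1 t + c2 * U2 t * b2 t)) t
        + (c1 * (b1 t)^2 + c2 * (b2 t)^2))) T"
    unfolding cost_def P_def by (simp add: power2_eq_square algebra_simps)
  also have "\<dots> = 1/2 * (P (\<lambda>t. c1 * (U1 t)^2 + c2 * (U2 t)^2) T + (P (\<lambda>t. 2 * (c1 * U1 t * b1 t + c2 * U2 t * b2 t)) T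
        + P (\<lambda>t. c1 * (b1 t)^2 + c2 * (b2 t)^2) T))"
    using c by (simp add: P_add[OF T _ _ Tin] continuous_intros)
  also have "\<dots> = cost c1 c2 T U1 U2
     + P (\<lambda>t. c1 * U1 t * b1 t + c2 * U2 t * b2 t) T + 1/2 * P (\<lambda>t. c1 * (b1 t)^2 + c2 * (b2 t)^2) T"
    unfolding P_cmult by (simp add: cost_def P_def algebra_simps)
  finally show ?thesis .
qed


definition Cf :: "real \<Rightarrow> real \<Rightarrow> (real \<Rightarrow> real) \<Rightarrow> (real \<Rightarrow> real) \<Rightarrow> real \<Rightarrow> (real \<Rightarrow> real) \<Rightarrow> (real \<Rightarrow> real) \<Rightarrow> real" where
  "Cf c1 c2 u1 u2 T b1 b2 = P (\<lambda>t. c1 * u1 t * b1 t + c2 * u2 t * b2 t) T"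

context
  fixes T a2 a3 :: real and U1 U2 :: "real \<Rightarrow> real"
  assumes T: "0 \<le> T" and cU1: "continuous_on {0..T} U1" and cU2: "continuous_on {0..T} U2"
begin

lemma Lin_add:
  assumes "continuous_on {0..T} f1" "continuous_on {0..T} f2" "continuous_on {0..T} g1" "continuous_on {0..T} g2"
  shows "Lin a2 a3 U1 U2 (\<lambda>s. f1 s + g1 s) (\<lambda>s. f2 s + g2 s) T = Lin a2 a3 U1 U2 f1 f2 T + Lin a2 a3 U1 U2 g1 g2 T"
  using Lin_lin[OF T cU1 cU2 assms, of a2 a3 1 1] by simp

lemma Lin_cmult:
  assumes "continuous_on {0..T} f1" "continuous_on {0..T} f2"
  shows "Lin a2 a3 U1 U2 (\<lambda>s. c * f1 s) (\<lambda>s. c * f2 s) T = c *\<^sub>R Lin a2 a3 U1 U2 f1 f2 T"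
  using Lin_lin[OF T cU1 cU2 assms assms, of a2 a3 c 0] by simp

lemma Lin_zero: "Lin a2 a3 U1 U2 (\<lambda>s. 0) (\<lambda>s. 0) T = 0"
  using Lin_cmult[of "\<lambda>_. 0" "\<lambda>_. 0" 0] by simp

lemma Lin_sum:
  assumes "finite A" "\<And>k. continuous_on {0..T} (f k)" "\<And>k. continuous_on {0..T} (g k)"
  shows "Lin a2 a3 U1 U2 (\<lambda>t. \<Sum>k\<in>A. e k * f k t) (\<lambda>t. \<Sum>k\<in>A. e k * g k t) T
     = (\<Sum>k\<in>A. e k *\<^sub>R Lin a2 a3 U1 U2 (f k) (g k) T)"
  using assms(1)
proof (induction A rule: finite_induct)
  case empty then show ?case using Lin_zero by simp
next
  case (insert x A)
  have "Lin a2 a3 U1 U2 (\<lambda>t. \<Sum>k\<in>insert x A. e k * f k t) (\<lambda>t. \<Sum>k\<in>insert x A. e k * g k t) T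
      = Lin a2 a3 U1 U2 (\<lambda>t. e x * f x t + (\<Sum>k\<in>A. e k * f k t)) (\<lambda>t. e x * g x t + (\<Sum>k\<in>A. e k * g k t)) T"
    using insert by simp
  also have "\<dots> = Lin a2 a3 U1 U2 (\<lambda>t. e x * f x t) (\<lambda>t. e x * g x t) T +
      Lin a2 a3 U1 U2 (\<lambda>t. \<Sum>k\<in>A. e k * f k t) (\<lambda>t. \<Sum>k\<in>A. e k * g k t) T"
    by (rule Lin_add) (use assms(2,3) in \<open>auto intro!: continuous_intros\<close>)
  also have "\<dots> = (\<Sum>k\<in>insert x A. e k *\<^sub>R Lin a2 a3 U1 U2 (f k) (g k) T)"
    using insert Lin_cmult[OF assms(2,3)] by simp
  finally show ?case .
qed

end

lemma Cf_lin:
  assumes T: "0 \<le> T" and c: "continuous_on {0..T} u1" "continuous_on {0..T} u2"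
    "continuous_on {0..T} f1" "continuous_on {0..T} f2" "continuous_on {0..T} g1" "continuous_on {0..T} g2"
  shows "Cf c1 c2 u1 u2 T (\<lambda>s. c * f1 s + d * g1 s) (\<lambda>s. c * f2 s + d * g2 s) = c * Cf c1 c2 u1 u2 T f1 f2 + d * Cf c1 c2 u1 u2 T g1 g2"
proof -
  have Tin: "T \<in> {0..T}" using T by simp
  have "Cf c1 c2 u1 u2 T (\<lambda>s. c * f1 s + d * g1 s) (\<lambda>s. c * f2 s + d * g2 s) =
    P (\<lambda>t. c * (c1 * u1 t * f1 t + c2 * u2 t * f2 t) + d * (c1 * u1 t * g1 t + c2 * u2 t * g2 t)) T"
    unfolding Cf_def by (simp add: algebra_simps)
  also have "\<dots> = c * Cf c1 c2 u1 u2 T f1 f2 + d * Cf c1 c2 u1 u2 T g1 g2"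
    unfolding Cf_def by (rule P_lin[OF T _ _ Tin]) (use c in \<open>auto intro!: continuous_intros\<close>)
  finally show ?thesis .
qed

lemma Cf_sum:
  assumes T: "0 \<le> T" and c: "continuous_on {0..T} u1" "continuous_on {0..T} u2"
    and "finite A" "\<And>k. continuous_on {0..T} (f k)" "\<And>k. continuous_on {0..T} (g k)"
  shows "Cf c1 c2 u1 u2 T (\<lambda>t. \<Sum>k\<in>A. e k * f k t) (\<lambda>t. \<Sum>k\<in>A. e k * g k t)
     = (\<Sum>k\<in>A. e k * Cf c1 c2 u1 u2 T (f k) (g k))"
  using assms(4)
proof (induction A rule: finite_induct)
  case empty then show ?case by (simp add: Cf_def P_def)
next
  case (insert x A)
  have "Cf c1 c2 u1 u2 T (\<lambda>t. \<Sum>k\<in>insert x A. e k * f k t) (\<lambda>t. \<Sum>k\<in>insert x A. e k * g k t)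
      = Cf c1 c2 u1 u2 T (\<lambda>t. e x * f x t + 1 * (\<Sum>k\<in>A. e k * f k t)) (\<lambda>t. e x * g x t + 1 * (\<Sum>k\<in>A. e k * g k t))"
    using insert by simp
  also have "\<dots> = e x * Cf c1 c2 u1 u2 T (f x) (g x) + 1 * Cf c1 c2 u1 u2 T (\<lambda>t. \<Sum>k\<in>A. e k * f k t) (\<lambda>t. \<Sum>k\<in>A. e k * g k t)"
    by (rule Cf_lin[OF T c]) (use assms(5,6) in \<open>auto intro!: continuous_intros\<close>)
  finally show ?case using insert by simp
qed


lemma rpf_comb:
  assumes "real_polynomial_function v" "\<And>k. real_polynomial_function (w k)"
  shows "real_polynomial_function (\<lambda>t. s * v t + (\<Sum>k\<in>(UNIV::4 set). e$k * w k t))"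
proof (rule real_polynomial_function.intros(3))
  show "real_polynomial_function (\<lambda>t. s * v t)"
    by (rule real_polynomial_function.intros(4)[OF real_polynomial_function.intros(2) assms(1)])
  show "real_polynomial_function (\<lambda>t. \<Sum>k\<in>(UNIV::4 set). e$k * w k t)"
    by (rule real_polynomial_function_sum) (auto intro!: real_polynomial_function.intros(4)[OF real_polynomial_function.intros(2)] assms(2))
qed

lemma sum_bound4:
  assumes "\<And>k. \<bar>w k\<bar> \<le> M"
  shows "\<bar>\<Sum>k\<in>(UNIV::4 set). e$k * w k\<bar> \<le> 4 * norm e * M"
proof -
  have "\<bar>\<Sum>k\<in>(UNIV::4 set). e$k * w k\<bar> \<le> (\<Sum>k\<in>(UNIV::4 set). \<bar>e$k * w k\<bar>)" by (rule sum_abs)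
  also have "\<dots> \<le> (\<Sum>k\<in>(UNIV::4 set). norm e * M)"
    by (intro sum_mono abs_mult_le component_le_norm_cart assms)
  also have "\<dots> = 4 * norm e * M" by simp
  finally show ?thesis .
qed

lemma normal_stationary:
  fixes w1 w2 :: "4 \<Rightarrow> real \<Rightarrow> real"
  assumes T: "0 < T" and c1: "c1 \<ge> 0" and c2: "c2 \<ge> 0"
    and cu1: "continuous_on {0..T} u1" and cu2: "continuous_on {0..T} u2"
    and pv1: "real_polynomial_function v1" and pv2: "real_polynomial_function v2"
    and pw1: "\<And>k. real_polynomial_function (w1 k)" and pw2: "\<And>k. real_polynomial_function (w2 k)"
    and Lw: "\<And>k. Lin a2 a3 u1 u2 (w1 k) (w2 k) T = axis k 1"
    and Lv: "Lin a2 a3 u1 u2 v1 v2 T = 0"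
    and opt: "\<And>b1 b2. real_polynomial_function b1 \<Longrightarrow> real_polynomial_function b2 \<Longrightarrow>
       Evec a1 a2 a3 a4 (\<lambda>t. u1 t + b1 t) (\<lambda>t. u2 t + b2 t) T = Evec a1 a2 a3 a4 u1 u2 T \<Longrightarrow>
       cost c1 c2 T u1 u2 \<le> cost c1 c2 T (\<lambda>t. u1 t + b1 t) (\<lambda>t. u2 t + b2 t)"
  shows "Cf c1 c2 u1 u2 T v1 v2 = 0"
proof -
  have T0: "0 \<le> T" using T by simp
  have Tin: "T \<in> {0..T}" using T by simp
  define B1 where "B1 = (\<lambda>s (e::real^4) t. s * v1 t + (\<Sum>k\<in>UNIV. e$k * w1 k t))"
  define B2 where "B2 = (\<lambda>s (e::real^4) t. s * v2 t + (\<Sum>k\<in>UNIV. e$k * w2 k t))"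
  have pB1: "real_polynomial_function (B1 s e)" for s e
    unfolding B1_def using rpf_comb[OF pv1 pw1] by simp
  have pB2: "real_polynomial_function (B2 s e)" for s e
    unfolding B2_def using rpf_comb[OF pv2 pw2] by simp
  have cB1: "continuous_on {0..T} (B1 s e)" for s e using rpf_cont[OF pB1] .
  have cB2: "continuous_on {0..T} (B2 s e)" for s e using rpf_cont[OF pB2] .
  have cv1: "continuous_on {0..T} v1" and cv2: "continuous_on {0..T} v2" using rpf_cont pv1 pv2 by auto
  have cw1: "continuous_on {0..T} (w1 k)" and cw2: "continuous_on {0..T} (w2 k)" for k
    using rpf_cont pw1 pw2 by auto
  obtain Mv1 where Mv1: "\<And>t. t \<in> {0..T} \<Longrightarrow> \<bar>v1 t\<bar> \<le> Mv1" "Mv1 \<ge> 1" using cont_bound[OF cv1] by blast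
  obtain Mv2 where Mv2: "\<And>t. t \<in> {0..T} \<Longrightarrow> \<bar>v2 t\<bar> \<le> Mv2" "Mv2 \<ge> 1" using cont_bound[OF cv2] by blast
  define Mv where "Mv = Mv1 + Mv2"
  have Mv: "\<bar>v1 t\<bar> \<le> Mv" "\<bar>v2 t\<bar> \<le> Mv" if "t \<in> {0..T}" for t
  proof -
    have "\<bar>v1 t\<bar> \<le> Mv1" "\<bar>v2 t\<bar> \<le> Mv2" using Mv1(1) Mv2(1) that by blast+
    then show "\<bar>v1 t\<bar> \<le> Mv" "\<bar>v2 t\<bar> \<le> Mv" using Mv1(2) Mv2(2) by (auto simp: Mv_def)
  qed
  have "\<forall>k. \<exists>M. M \<ge> 0 \<and> (\<forall>t\<in>{0..T}. \<bar>w1 k t\<bar> \<le> M \<and> \<bar>w2 k t\<bar> \<le> M)"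
  proof
    fix k
    obtain Ma where Ma: "\<And>t. t \<in> {0..T} \<Longrightarrow> \<bar>w1 k t\<bar> \<le> Ma" "Ma \<ge> 1" using cont_bound[OF cw1] by blast
    obtain Mb where Mb: "\<And>t. t \<in> {0..T} \<Longrightarrow> \<bar>w2 k t\<bar> \<le> Mb" "Mb \<ge> 1" using cont_bound[OF cw2] by blast
    show "\<exists>M. M \<ge> 0 \<and> (\<forall>t\<in>{0..T}. \<bar>w1 k t\<bar> \<le> M \<and> \<bar>w2 k t\<bar> \<le> M)"
      using Ma Mb by (intro exI[of _ "Ma + Mb"]) force
  qed
  then obtain Mk where Mk: "\<And>k. Mk k \<ge> 0" "\<And>k t. t \<in> {0..T} \<Longrightarrow> \<bar>w1 k t\<bar> \<le> Mk k \<and> \<bar>w2 k t\<bar> \<le> Mk k"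
    by metis
  define Mw where "Mw = (\<Sum>k\<in>UNIV. Mk k)"
  have Mkw: "Mk k \<le> Mw" for k unfolding Mw_def by (rule member_le_sum) (auto intro: Mk)
  have Mw0: "Mw \<ge> 0" unfolding Mw_def by (intro sum_nonneg Mk)
  define Mb where "Mb = Mv + 4 * Mw"
  have Mb1: "Mb \<ge> 1" using Mv1 Mv2 Mw0 by (simp add: Mb_def Mv_def)
  have Bb: "\<bar>B1 s e t\<bar> \<le> Mb * (\<bar>s\<bar> + norm e) \<and> \<bar>B2 s e t\<bar> \<le> Mb * (\<bar>s\<bar> + norm e)" if t: "t \<in> {0..T}" for s e t
  proof -
    have w1b: "\<bar>w1 k t\<bar> \<le> Mw" and w2b: "\<bar>w2 k t\<bar> \<le> Mw" for k using Mk(2)[OF t, of k] Mkw[of k] by auto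
    have "\<bar>B1 s e t\<bar> \<le> \<bar>s\<bar> * Mv + 4 * norm e * Mw"
      unfolding B1_def using abs_mult_le[OF order.refl Mv(1)[OF t], of s] sum_bound4[of "\<lambda>k. w1 k t", OF w1b, of e]
      by (simp add: abs_triangle_ineq order_trans[OF abs_triangle_ineq] add_mono)
    moreover have "\<bar>B2 s e t\<bar> \<le> \<bar>s\<bar> * Mv + 4 * norm e * Mw"
      unfolding B2_def using abs_mult_le[OF order.refl Mv(2)[OF t], of s] sum_bound4[of "\<lambda>k. w2 k t", OF w2b, of e]
      by (simp add: abs_triangle_ineq order_trans[OF abs_triangle_ineq] add_mono)
    moreover have "\<bar>s\<bar> * Mv + 4 * norm e * Mw \<le> Mb * (\<bar>s\<bar> + norm e)"
    proof -
      have "\<bar>s\<bar> * Mv \<le> \<bar>s\<bar> * Mb" using Mw0 by (intro mult_left_mono) (auto simp: Mb_def)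
      moreover have "norm e * (4 * Mw) \<le> norm e * Mb" using Mv1 Mv2 by (intro mult_left_mono) (auto simp: Mb_def Mv_def)
      ultimately show ?thesis by (simp add: algebra_simps)
    qed
    ultimately show ?thesis by linarith
  qed
  have LinB: "Lin a2 a3 u1 u2 (B1 s e) (B2 s e) T = s *\<^sub>R Lin a2 a3 u1 u2 v1 v2 T + e" for s e
  proof -
    have "Lin a2 a3 u1 u2 (B1 s e) (B2 s e) T = Lin a2 a3 u1 u2 (\<lambda>t. s * v1 t) (\<lambda>t. s * v2 t) T +
       Lin a2 a3 u1 u2 (\<lambda>t. \<Sum>k\<in>UNIV. e$k * w1 k t) (\<lambda>t. \<Sum>k\<in>UNIV. e$k * w2 k t) T"
      unfolding B1_def B2_def
      by (rule Lin_add[OF T0 cu1 cu2]) (use cv1 cv2 cw1 cw2 in \<open>auto intro!: continuous_intros\<close>)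
    also have "\<dots> = s *\<^sub>R Lin a2 a3 u1 u2 v1 v2 T + (\<Sum>k\<in>UNIV. e$k *\<^sub>R axis k 1)"
      by (simp add: Lin_cmult[OF T0 cu1 cu2 cv1 cv2] Lin_sum[OF T0 cu1 cu2 _ cw1 cw2] Lw)
    also have "(\<Sum>k\<in>UNIV. e$k *\<^sub>R axis k (1::real)) = e"
      using basis_expansion[of e] by (simp add: scalar_mult_eq_scaleR)
    finally show ?thesis .
  qed
  define dd :: "real^4" where "dd = (\<chi> k. Cf c1 c2 u1 u2 T (w1 k) (w2 k))"
  have CfB: "Cf c1 c2 u1 u2 T (B1 s e) (B2 s e) = s * Cf c1 c2 u1 u2 T v1 v2 + dd \<bullet> e" for s e
  proof -
    have "Cf c1 c2 u1 u2 T (B1 s e) (B2 s e) = s * Cf c1 c2 u1 u2 T v1 v2 +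
       1 * Cf c1 c2 u1 u2 T (\<lambda>t. \<Sum>k\<in>UNIV. e$k * w1 k t) (\<lambda>t. \<Sum>k\<in>UNIV. e$k * w2 k t)"
      unfolding B1_def B2_def using Cf_lin[OF T0 cu1 cu2 cv1 cv2, of "\<lambda>t. \<Sum>k\<in>UNIV. e$k * w1 k t" "\<lambda>t. \<Sum>k\<in>UNIV. e$k * w2 k t" c1 c2 s 1]
      using cw1 cw2 by (simp add: continuous_intros)
    also have "\<dots> = s * Cf c1 c2 u1 u2 T v1 v2 + dd \<bullet> e"
      by (simp add: Cf_sum[OF T0 cu1 cu2 _ cw1 cw2] dd_def inner_vec_def mult.commute)
    finally show ?thesis .
  qed
  have B00: "(\<lambda>t. u1 t + B1 0 0 t) = u1" "(\<lambda>t. u2 t + B2 0 0 t) = u2"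
    by (simp_all add: B1_def B2_def)
  define Phi where "Phi s e = Evec a1 a2 a3 a4 (\<lambda>t. u1 t + B1 s e t) (\<lambda>t. u2 t + B2 s e t) T" for s e
  define Cst where "Cst s e = cost c1 c2 T (\<lambda>t. u1 t + B1 s e t) (\<lambda>t. u2 t + B2 s e t)" for s e
  obtain KE where KE: "KE \<ge> 0" and KEx: "\<And>b1 b2 \<beta>. continuous_on {0..T} b1 \<Longrightarrow> continuous_on {0..T} b2 \<Longrightarrow>
     (\<forall>t\<in>{0..T}. \<bar>b1 t\<bar> \<le> \<beta> \<and> \<bar>b2 t\<bar> \<le> \<beta>) \<Longrightarrow> \<beta> \<le> 1 \<Longrightarrow>
     norm (Evec a1 a2 a3 a4 (\<lambda>t. u1 t + b1 t) (\<lambda>t. u2 t + b2 t) T - Evec a1 a2 a3 a4 u1 u2 T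
        - Lin a2 a3 u1 u2 b1 b2 T) \<le> KE * \<beta>^2 \<and> norm (Lin a2 a3 u1 u2 b1 b2 T) \<le> KE * \<beta>"
    using expansion[OF T0 cu1 cu2, of a1 a2 a3 a4] by blast
  define \<delta> where "\<delta> = 1 / (2 * Mb)"
  have \<delta>0: "\<delta> > 0" using Mb1 by (simp add: \<delta>_def)
  have \<beta>1: "Mb * (\<bar>s\<bar> + norm e) \<le> 1" if "\<bar>s\<bar> \<le> \<delta>" "norm e \<le> \<delta>" for s e
  proof -
    have "Mb * (\<bar>s\<bar> + norm e) \<le> Mb * (2 * \<delta>)" using that Mb1 by (intro mult_left_mono) auto
    also have "\<dots> = 1" using Mb1 by (simp add: \<delta>_def)
    finally show ?thesis .
  qed
  define Kc where "Kc = 1/2 * (T * ((c1 + c2) * Mb^2))"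
  have Kc0: "Kc \<ge> 0" using T c1 c2 by (simp add: Kc_def)
  show ?thesis
  proof (rule lagrange_abs[where Phi=Phi and K="KE * Mb^2 + Kc" and \<delta>=\<delta> and dd=dd and Cst=Cst])
    show "0 \<le> KE * Mb^2 + Kc" using KE Kc0 by simp
    show "0 < \<delta>" by (rule \<delta>0)
    fix s and e :: "real^4" assume s: "\<bar>s\<bar> \<le> \<delta>" and e: "norm e \<le> \<delta>"
    let ?\<beta> = "Mb * (\<bar>s\<bar> + norm e)"
    have bnd: "\<forall>t\<in>{0..T}. \<bar>B1 s e t\<bar> \<le> ?\<beta> \<and> \<bar>B2 s e t\<bar> \<le> ?\<beta>" using Bb by blast
    note X = KEx[OF cB1 cB2 bnd \<beta>1[OF s e]]
    have "norm (Phi s e - Phi 0 0 - e) \<le> KE * ?\<beta>^2"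
      using X LinB[of s e] Lv unfolding Phi_def B00 by simp
    also have "\<dots> = KE * Mb^2 * (\<bar>s\<bar> + norm e)^2" by (simp add: power_mult_distrib)
    also have "\<dots> \<le> (KE * Mb^2 + Kc) * (\<bar>s\<bar> + norm e)^2"
      using Kc0 by (simp add: distrib_right)
    finally show "norm (Phi s e - Phi 0 0 - e) \<le> (KE * Mb^2 + Kc) * (\<bar>s\<bar> + norm e)^2" .
    have E: "Cst s e - Cst 0 0 - s * Cf c1 c2 u1 u2 T v1 v2 - dd \<bullet> e = 1/2 * P (\<lambda>t. c1 * (B1 s e t)^2 + c2 * (B2 s e t)^2) T"
      unfolding Cst_def B00 using cost_exp[OF T0 cu1 cu2 cB1 cB2, of c1 c2 s e s e] CfB[of s e]
      by (simp add: Cf_def)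
    have PB: "\<bar>P (\<lambda>t. c1 * (B1 s e t)^2 + c2 * (B2 s e t)^2) T\<bar> \<le> T * ((c1 + c2) * ?\<beta>^2)"
    proof (rule P_bound[OF _ _ Tin])
      show "continuous_on {0..T} (\<lambda>t. c1 * (B1 s e t)^2 + c2 * (B2 s e t)^2)"
        using cB1 cB2 by (intro continuous_intros)
      fix t assume t: "t \<in> {0..T}"
      have "(B1 s e t)^2 \<le> ?\<beta>^2" "(B2 s e t)^2 \<le> ?\<beta>^2"
        using bnd t by (auto intro!: power2_le_iff_abs_le[THEN iffD2] simp: abs_le_iff)
      then show "\<bar>c1 * (B1 s e t)^2 + c2 * (B2 s e t)^2\<bar> \<le> (c1 + c2) * ?\<beta>^2"
        using c1 c2 by (simp add: algebra_simps add_mono mult_left_mono)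
    qed
    have "\<bar>Cst s e - Cst 0 0 - s * Cf c1 c2 u1 u2 T v1 v2 - dd \<bullet> e\<bar> = 1/2 * \<bar>P (\<lambda>t. c1 * (B1 s e t)^2 + c2 * (B2 s e t)^2) T\<bar>"
      unfolding E by simp
    also have "\<dots> \<le> 1/2 * (T * ((c1 + c2) * ?\<beta>^2))" using PB by simp
    also have "\<dots> = Kc * (\<bar>s\<bar> + norm e)^2" by (simp add: Kc_def power_mult_distrib)
    also have "\<dots> \<le> (KE * Mb^2 + Kc) * (\<bar>s\<bar> + norm e)^2"
      using KE by (simp add: algebra_simps)
    finally show "\<bar>Cst s e - Cst 0 0 - s * Cf c1 c2 u1 u2 T v1 v2 - dd \<bullet> e\<bar> \<le> (KE * Mb^2 + Kc) * (\<bar>s\<bar> + norm e)^2" .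
  next
    fix s e assume "Phi s e = Phi 0 0"
    then have "Evec a1 a2 a3 a4 (\<lambda>t. u1 t + B1 s e t) (\<lambda>t. u2 t + B2 s e t) T = Evec a1 a2 a3 a4 u1 u2 T"
      unfolding Phi_def B00 .
    from opt[OF pB1 pB2 this] show "Cst 0 0 \<le> Cst s e" unfolding Cst_def B00 .
  next
    fix s
    show "continuous_on UNIV (Phi s)"
    proof (rule lip_cont)
      fix e0 :: "real^4"
      have cV1: "continuous_on {0..T} (\<lambda>t. u1 t + B1 s e0 t)" using cu1 cB1 by (intro continuous_intros)
      have cV2: "continuous_on {0..T} (\<lambda>t. u2 t + B2 s e0 t)" using cu2 cB2 by (intro continuous_intros)
      obtain KV where KV: "KV \<ge> 0" and KVx: "\<And>b1 b2 \<beta>. continuous_on {0..T} b1 \<Longrightarrow> continuous_on {0..T} b2 \<Longrightarrow>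
         (\<forall>t\<in>{0..T}. \<bar>b1 t\<bar> \<le> \<beta> \<and> \<bar>b2 t\<bar> \<le> \<beta>) \<Longrightarrow> \<beta> \<le> 1 \<Longrightarrow>
         norm (Evec a1 a2 a3 a4 (\<lambda>t. (u1 t + B1 s e0 t) + b1 t) (\<lambda>t. (u2 t + B2 s e0 t) + b2 t) T - Evec a1 a2 a3 a4 (\<lambda>t. u1 t + B1 s e0 t) (\<lambda>t. u2 t + B2 s e0 t) T
            - Lin a2 a3 (\<lambda>t. u1 t + B1 s e0 t) (\<lambda>t. u2 t + B2 s e0 t) b1 b2 T) \<le> KV * \<beta>^2
          \<and> norm (Lin a2 a3 (\<lambda>t. u1 t + B1 s e0 t) (\<lambda>t. u2 t + B2 s e0 t) b1 b2 T) \<le> KV * \<beta>"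
        using expansion[OF T0 cV1 cV2, of a1 a2 a3 a4] by blast
      show "\<exists>L d. d > 0 \<and> (\<forall>e. norm (e - e0) \<le> d \<longrightarrow> norm (Phi s e - Phi s e0) \<le> L * norm (e - e0))"
      proof (rule exI[of _ "2 * KV * Mb"], rule exI[of _ "1 / Mb"], intro conjI allI impI)
        show "0 < 1 / Mb" using Mb1 by simp
        fix e assume de: "norm (e - e0) \<le> 1 / Mb"
        let ?\<beta> = "Mb * (\<bar>0\<bar> + norm (e - e0))"
        have b1: "?\<beta> \<le> 1" using de Mb1 by (simp add: field_simps)
        have bnd: "\<forall>t\<in>{0..T}. \<bar>B1 0 (e - e0) t\<bar> \<le> ?\<beta> \<and> \<bar>B2 0 (e - e0) t\<bar> \<le> ?\<beta>" using Bb by blast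
        have eq1: "(\<lambda>t. (u1 t + B1 s e0 t) + B1 0 (e - e0) t) = (\<lambda>t. u1 t + B1 s e t)"
          by (rule ext) (simp add: B1_def left_diff_distrib sum_subtractf)
        have eq2: "(\<lambda>t. (u2 t + B2 s e0 t) + B2 0 (e - e0) t) = (\<lambda>t. u2 t + B2 s e t)"
          by (rule ext) (simp add: B2_def left_diff_distrib sum_subtractf)
        note Y = KVx[OF cB1 cB2 bnd b1, unfolded eq1 eq2]
        let ?L = "Lin a2 a3 (\<lambda>t. u1 t + B1 s e0 t) (\<lambda>t. u2 t + B2 s e0 t) (B1 0 (e - e0)) (B2 0 (e - e0)) T"
        have "norm (Phi s e - Phi s e0) \<le> norm ?L + norm (Phi s e - Phi s e0 - ?L)"
          using norm_triangle_ineq[of ?L "Phi s e - Phi s e0 - ?L"] by simp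
        also have "\<dots> \<le> norm ?L + KV * ?\<beta>^2"
          using Y unfolding Phi_def by simp
        also have "\<dots> \<le> KV * ?\<beta> + KV * ?\<beta>" 
        proof -
          have "?\<beta> * ?\<beta> \<le> 1 * ?\<beta>" by (rule mult_right_mono[OF b1]) (use Mb1 in simp)
          then have "?\<beta>^2 \<le> ?\<beta>" by (simp add: power2_eq_square)
          then have h1: "KV * ?\<beta>^2 \<le> KV * ?\<beta>" using KV by (rule mult_left_mono)
          show ?thesis using Y h1 by linarith
        qed
        also have "\<dots> = 2 * KV * Mb * norm (e - e0)" by simp
        finally show "norm (Phi s e - Phi s e0) \<le> 2 * KV * Mb * norm (e - e0)" .
      qed
    qed
  qed
qed


lemma pointwise_zero:
  assumes T: "0 < T" and h1: "continuous_on {0..T} h1" and h2: "continuous_on {0..T} h2"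
    and Z: "\<And>b1 b2. real_polynomial_function b1 \<Longrightarrow> real_polynomial_function b2 \<Longrightarrow>
      P (\<lambda>t. h1 t * b1 t + h2 t * b2 t) T = 0"
    and t: "t \<in> {0..T}"
  shows "h1 t = 0" "h2 t = 0"
proof -
  show "h1 t = 0"
  proof (rule fund_lemma[OF T h1 _ t])
    fix p :: "real \<Rightarrow> real" assume "real_polynomial_function p"
    from Z[OF this real_polynomial_function.intros(2)[of 0]] show "P (\<lambda>t. h1 t * p t) T = 0" by simp
  qed
  show "h2 t = 0"
  proof (rule fund_lemma[OF T h2 _ t])
    fix p :: "real \<Rightarrow> real" assume "real_polynomial_function p"
    from Z[OF real_polynomial_function.intros(2)[of 0] this] show "P (\<lambda>t. h2 t * p t) T = 0" by simp
  qed
qed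

lemma deriv_unique_Icc:
  assumes T: "0 < T" and t: "t \<in> {0..T}"
    and "(f has_real_derivative D1) (at t within {0..T})" "(f has_real_derivative D2) (at t within {0..T})"
  shows "D1 = D2"
proof -
  have "t islimpt {0..T}" using T t by simp
  then have "\<not> trivial_limit (at t within {0..T})" by (simp add: trivial_limit_within)
  then have "at t within {0..T} \<noteq> bot" by simp
  then show ?thesis
    using vector_derivative_unique_within assms(3,4)
    by (metis has_real_derivative_iff_has_vector_derivative)
qed

lemma abnormal_u1:
  assumes T: "0 < T" and cu1: "continuous_on {0..T} u1" and cu2: "continuous_on {0..T} u2"
    and lam: "lam \<noteq> 0"
    and g0: "\<And>t. t \<in> {0..T} \<Longrightarrow> gg1 lam a2 a3 u1 u2 T t = 0"
    and p0: "\<And>t. t \<in> {0..T} \<Longrightarrow> pp2 lam u1 T t = 0"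
    and t: "t \<in> {0..T}"
  shows "u1 t = 0"
proof -
  have T0: "0 \<le> T" using T by simp
  have Tin: "T \<in> {0..T}" using T by simp
  define Y where "Y t = P u1 T - P u1 t" for t
  have cY: "continuous_on {0..T} Y" unfolding Y_def using cu1 by (intro continuous_intros)
  have dY: "(Y has_real_derivative - u1 s) (at s within {0..T})" if "s \<in> {0..T}" for s
    unfolding Y_def using cu1 that by (auto intro!: derivative_eq_intros)
  have YT: "Y T = 0" by (simp add: Y_def)
  have pp3Y: "pp3 lam u1 T s = lam$3 + lam$0 * Y s" for s by (simp add: pp3_def Y_def)
  have dY2: "((\<lambda>s. (Y s)^2 / 2) has_real_derivative Y x * (- u1 x)) (at x within {0..T})" if x: "x \<in> {0..T}" for x
  proof -
    have "((\<lambda>s. Y s * Y s / 2) has_real_derivative ((- u1 x) * Y x + (- u1 x) * Y x) / 2) (at x within {0..T})"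
      using DERIV_cdivide[OF DERIV_mult[OF dY[OF x] dY[OF x]], of 2] by simp
    then show ?thesis by (simp add: power2_eq_square algebra_simps)
  qed
  have pp2Y: "pp2 lam u1 T s = lam$2 + lam$3 * Y s + lam$0 * ((Y s)^2 / 2)" if s: "s \<in> {0..T}" for s
  proof -
    let ?D = "\<lambda>s. pp2 lam u1 T s - (lam$2 + lam$3 * Y s + lam$0 * ((Y s)^2 / 2))"
    have "\<exists>c. \<forall>x\<in>{0..T}. ?D x = c"
    proof (rule has_field_derivative_zero_constant)
      show "convex {0..T::real}" by simp
      fix x assume x: "x \<in> {0..T}"
      have "(?D has_real_derivative - (pp3 lam u1 T x * u1 x) - (0 + lam$3 * (- u1 x) + lam$0 * (Y x * (- u1 x))))
          (at x within {0..T})"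
        by (rule DERIV_diff[OF pp2_deriv[OF cu1 x] DERIV_add[OF DERIV_add[OF DERIV_const DERIV_cmult[OF dY[OF x]]]
              DERIV_cmult[OF dY2[OF x]]]])
      then show "(?D has_real_derivative 0) (at x within {0..T})"
        by (rule deriv_eqI) (simp add: pp3Y algebra_simps)
    qed
    then obtain c where c: "\<And>x. x \<in> {0..T} \<Longrightarrow> ?D x = c" by blast
    have "c = 0" using c[OF Tin] YT pp_T(2)[OF T0] by simp
    then show ?thesis using c[OF s] by simp
  qed
  have l2: "lam$2 = 0" using p0[OF Tin] pp_T(2)[OF T0] by simp
  have eqY: "Y s * (lam$3 + lam$0 * Y s / 2) = 0" if "s \<in> {0..T}" for s
    using pp2Y[OF that] p0[OF that] l2 by (simp add: power2_eq_square algebra_simps)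
  have l30: "lam$3 \<noteq> 0 \<or> lam$0 \<noteq> 0"
  proof (rule ccontr)
    assume "\<not> ?thesis"
    then have z: "lam$3 = 0" "lam$0 = 0" by auto
    have "lam$1 = 0" using g0[OF Tin] z by (simp add: gg1_def pp3Y)
    then have "lam = 0" using z l2 unfolding vec_eq_iff forall4 by simp
    with lam show False by simp
  qed
  have Y0: "Y s = 0" if s: "s \<in> {0..T}" for s
  proof (rule ccontr)
    assume ne: "Y s \<noteq> 0"
    have e1: "lam$3 + lam$0 * Y s / 2 = 0" using eqY[OF s] ne by simp
    have l0: "lam$0 \<noteq> 0" using e1 l30 by auto
    have sT: "s \<le> T" using s by simp
    have cY': "continuous_on {s..T} Y" using s by (intro continuous_on_subset[OF cY]) auto
    have "\<exists>x. s \<le> x \<and> x \<le> T \<and> Y x = Y s / 2"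
    proof (cases "Y s > 0")
      case True then show ?thesis using IVT2'[of Y T "Y s / 2" s, OF _ _ sT cY'] YT by simp
    next
      case False then show ?thesis using IVT'[of Y s "Y s / 2" T, OF _ _ sT cY'] YT ne by simp
    qed
    then obtain x where x: "s \<le> x" "x \<le> T" "Y x = Y s / 2" by blast
    have xin: "x \<in> {0..T}" using x s by auto
    have "lam$3 + lam$0 * (Y s / 2) / 2 = 0" using eqY[OF xin] x(3) ne by simp
    moreover have "lam$0 * (Y s / 2) / 2 = (lam$0 * Y s) / 4" by simp
    ultimately have "lam$0 * Y s = 0" using e1 by linarith
    with l0 ne show False by simp
  qed
  have d0: "(Y has_real_derivative 0) (at t within {0..T})"
  proof (rule has_field_derivative_transform_within[OF DERIV_const zero_less_one t])
    fix x assume "x \<in> {0..T}" then show "0 = Y x" using Y0 by simp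
  qed
  have "- u1 t = 0" using deriv_unique_Icc[OF T t dY[OF t] d0] .
  then show ?thesis by simp
qed

lemma XY_Evec: "XY a1 a2 a3 a4 U1 U2 T =
  Mx (Evec a1 a2 a3 a4 U1 U2 T $ 1) (Evec a1 a2 a3 a4 U1 U2 T $ 2) (Evec a1 a2 a3 a4 U1 U2 T $ 3) (Evec a1 a2 a3 a4 U1 U2 T $ 0)"
  by (simp add: XY_def Evec_def)

lemma competitor:
  assumes T: "0 \<le> T" and sV1: "smooth_control T V1" and sV2: "smooth_control T V2"
    and X0: "X0 = Mx a1 a2 a3 a4" and Xf: "Xf = XY a1 a2 a3 a4 u1 u2 T"
    and E: "Evec a1 a2 a3 a4 V1 V2 T = Evec a1 a2 a3 a4 u1 u2 T"
  shows "steers T X0 Xf V1 V2"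
  unfolding steers_def
proof (intro conjI sV1 sV2 exI[of _ "XY a1 a2 a3 a4 V1 V2"])
  show "trajectory T V1 V2 (XY a1 a2 a3 a4 V1 V2)"
    by (rule XY_traj) (use smooth_cont sV1 sV2 in auto)
  show "XY a1 a2 a3 a4 V1 V2 0 = X0" by (simp add: X0 XY_def)
  show "XY a1 a2 a3 a4 V1 V2 T = Xf" unfolding Xf XY_Evec E ..
qed

lemma smooth_const: "smooth_control T (\<lambda>t. c)"
  unfolding smooth_control_def
  by (rule exI[of _ UNIV]) (auto intro: differentiable_at_real_polynomial_function rpf_derivs)


lemma Yl_const: "0 \<le> t \<Longrightarrow> Yl a (\<lambda>_. m) t = a + m * t"
  by (simp add: Yl_def P_def)

lemma pointwise_zero':
  assumes T: "0 < T" and h1: "continuous_on {0..T} h1" and h2: "continuous_on {0..T} h2"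
    and Z: "\<forall>b1 b2. real_polynomial_function b1 \<longrightarrow> real_polynomial_function b2 \<longrightarrow>
      P (\<lambda>t. h1 t * b1 t + h2 t * b2 t) T = 0"
    and t: "t \<in> {0..T}"
  shows "h1 t = 0 \<and> h2 t = 0"
proof -
  have Z': "P (\<lambda>t. h1 t * b1 t + h2 t * b2 t) T = 0" if "real_polynomial_function b1" "real_polynomial_function b2" for b1 b2
    using Z that by blast
  show ?thesis using pointwise_zero[OF T h1 h2 Z' t] by blast
qed

theorem proposition5p1:
  fixes c1 c2 tf :: real and X0 Xf :: "real^4^4" and u1 u2 :: "real \<Rightarrow> real"
  assumes "c1 > 0" and "c2 > 0" and "tf > 0"
    and "X0 \<in> G4" and "Xf \<in> G4"
    and "steers tf X0 Xf u1 u2"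
    and "\<forall>v1 v2. steers tf X0 Xf v1 v2 \<longrightarrow> cost c1 c2 tf u1 u2 \<le> cost c1 c2 tf v1 v2"
  shows "\<exists>z1 z2 z3 z4 :: real \<Rightarrow> real. \<forall>t\<in>{0..tf}.
           u1 t = z1 t / c1 \<and> u2 t = z2 t / c2 \<and>
           (z1 has_real_derivative (1 / c2 * z2 t * z3 t)) (at t within {0..tf}) \<and>
           (z2 has_real_derivative (- 1 / c1 * z1 t * z3 t)) (at t within {0..tf}) \<and>
           (z3 has_real_derivative (- 1 / c1 * z1 t * z4 t)) (at t within {0..tf}) \<and>
           (z4 has_real_derivative 0) (at t within {0..tf})"
proof -
  have c1: "c1 > 0" and c2: "c2 > 0" and T: "tf > 0" using assms by auto
  have T0: "0 \<le> tf" and Tin: "tf \<in> {0..tf}" using T by auto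
  obtain X where su1: "smooth_control tf u1" and su2: "smooth_control tf u2"
    and tr: "trajectory tf u1 u2 X" and X0e: "X 0 = X0" and Xfe: "X tf = Xf"
    using assms(6) unfolding steers_def by blast
  have cu1: "continuous_on {0..tf} u1" and cu2: "continuous_on {0..tf} u2"
    using smooth_cont su1 su2 by auto
  obtain a1 a2 a3 a4 where X0m: "X0 = Mx a1 a2 a3 a4" using assms(4) by (auto simp: G4_Mx)
  have Xfm: "Xf = XY a1 a2 a3 a4 u1 u2 tf"
    using traj_is_XY[OF T0 tr _ cu1 cu2 Tin] X0e X0m Xfe by simp
  have opt: "cost c1 c2 tf u1 u2 \<le> cost c1 c2 tf V1 V2"
    if "smooth_control tf V1" "smooth_control tf V2" "Evec a1 a2 a3 a4 V1 V2 tf = Evec a1 a2 a3 a4 u1 u2 tf" for V1 V2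
    using assms(7) competitor[OF T0 that(1,2) X0m Xfm that(3)] by blast
  have optP: "cost c1 c2 tf u1 u2 \<le> cost c1 c2 tf (\<lambda>t. u1 t + b1 t) (\<lambda>t. u2 t + b2 t)"
    if "real_polynomial_function b1" "real_polynomial_function b2"
       "Evec a1 a2 a3 a4 (\<lambda>t. u1 t + b1 t) (\<lambda>t. u2 t + b2 t) tf = Evec a1 a2 a3 a4 u1 u2 tf" for b1 b2
    using opt[OF smooth_add[OF su1 that(1)] smooth_add[OF su2 that(2)] that(3)] .
  let ?L = "\<lambda>b1 b2. Lin a2 a3 u1 u2 b1 b2 tf"
  define S where "S = {?L b1 b2 | b1 b2. real_polynomial_function b1 \<and> real_polynomial_function b2}"
  have rc: "real_polynomial_function b \<Longrightarrow> continuous_on {0..tf} b" for b by (rule rpf_cont)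
  have subS: "subspace S"
    unfolding subspace_def
  proof (intro conjI ballI allI)
    show "0 \<in> S" unfolding S_def
      using Lin_zero[OF T0 cu1 cu2, of a2 a3] real_polynomial_function.intros(2)[of 0] by force
    fix x y assume "x \<in> S" "y \<in> S"
    then obtain f1 f2 g1 g2 where f: "x = ?L f1 f2" "real_polynomial_function f1" "real_polynomial_function f2"
      and g: "y = ?L g1 g2" "real_polynomial_function g1" "real_polynomial_function g2"
      unfolding S_def by blast
    show "x + y \<in> S" unfolding S_def
      using f g Lin_add[OF T0 cu1 cu2 rc[OF f(2)] rc[OF f(3)] rc[OF g(2)] rc[OF g(3)], of a2 a3]
      by (intro CollectI exI[of _ "\<lambda>s. f2 s + g2 s", THEN exI[of _ "\<lambda>s. f1 s + g1 s"]])
        (auto intro!: real_polynomial_function.intros(3))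
  next
    fix c x assume "x \<in> S"
    then obtain f1 f2 where f: "x = ?L f1 f2" "real_polynomial_function f1" "real_polynomial_function f2"
      unfolding S_def by blast
    show "c *\<^sub>R x \<in> S" unfolding S_def
      using f Lin_cmult[OF T0 cu1 cu2 rc[OF f(2)] rc[OF f(3)], of a2 a3 c]
      by (intro CollectI exI[of _ "\<lambda>s. c * f2 s", THEN exI[of _ "\<lambda>s. c * f1 s"]])
        (auto intro!: real_polynomial_function.intros(4)[OF real_polynomial_function.intros(2)])
  qed
  have costate': "lam \<bullet> ?L b1 b2 = P (\<lambda>t. gg1 lam a2 a3 u1 u2 tf t * b1 t + pp2 lam u1 tf t * b2 t) tf"
    if "real_polynomial_function b1" "real_polynomial_function b2" for lam b1 b2
    by (rule costate[OF T0 cu1 cu2 rc[OF that(1)] rc[OF that(2)]])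
  show ?thesis
  proof (cases "S = UNIV")
    case True
    have "\<forall>k. \<exists>b. real_polynomial_function (fst b) \<and> real_polynomial_function (snd b) \<and> ?L (fst b) (snd b) = axis k 1"
    proof
      fix k :: 4
      have "axis k 1 \<in> S" using True by simp
      then show "\<exists>b. real_polynomial_function (fst b) \<and> real_polynomial_function (snd b) \<and> ?L (fst b) (snd b) = axis k 1"
        unfolding S_def by force
    qed
    then have "\<exists>W. \<forall>k. real_polynomial_function (fst (W k)) \<and> real_polynomial_function (snd (W k)) \<and> ?L (fst (W k)) (snd (W k)) = axis k 1"
      by (rule choice)
    then obtain W where W: "\<And>k. real_polynomial_function (fst (W k))" "\<And>k. real_polynomial_function (snd (W k))"
      "\<And>k. ?L (fst (W k)) (snd (W k)) = axis k 1"
      by blast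
    define w1 where "w1 k = fst (W k)" for k
    define w2 where "w2 k = snd (W k)" for k
    have pw1: "\<And>k. real_polynomial_function (w1 k)" and pw2: "\<And>k. real_polynomial_function (w2 k)"
      and Lw: "\<And>k. ?L (w1 k) (w2 k) = axis k 1" using W by (auto simp: w1_def w2_def)
    have cw1: "continuous_on {0..tf} (w1 k)" and cw2: "continuous_on {0..tf} (w2 k)" for k
      using rc pw1 pw2 by auto
    define lam :: "real^4" where "lam = (\<chi> k. Cf c1 c2 u1 u2 tf (w1 k) (w2 k))"
    have CfL: "Cf c1 c2 u1 u2 tf v1 v2 = lam \<bullet> ?L v1 v2"
      if pv1: "real_polynomial_function v1" and pv2: "real_polynomial_function v2" for v1 v2
    proof -
      define y where "y = ?L v1 v2"
      define s1 where "s1 = (\<lambda>t. \<Sum>k\<in>UNIV. y$k * w1 k t)"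
      define s2 where "s2 = (\<lambda>t. \<Sum>k\<in>UNIV. y$k * w2 k t)"
      have ps1: "real_polynomial_function s1" unfolding s1_def
        by (rule real_polynomial_function_sum) (auto intro!: real_polynomial_function.intros(4)[OF real_polynomial_function.intros(2)] pw1)
      have ps2: "real_polynomial_function s2" unfolding s2_def
        by (rule real_polynomial_function_sum) (auto intro!: real_polynomial_function.intros(4)[OF real_polynomial_function.intros(2)] pw2)
      have Ls: "?L s1 s2 = y"
        using basis_expansion[of y] by (simp add: s1_def s2_def Lin_sum[OF T0 cu1 cu2 _ cw1 cw2] Lw scalar_mult_eq_scaleR)
      have Cs: "Cf c1 c2 u1 u2 tf s1 s2 = lam \<bullet> y"
        by (simp add: s1_def s2_def Cf_sum[OF T0 cu1 cu2 _ cw1 cw2] lam_def inner_vec_def mult.commute)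
      let ?v1 = "\<lambda>t. 1 * v1 t + (-1) * s1 t" and ?v2 = "\<lambda>t. 1 * v2 t + (-1) * s2 t"
      have pv1': "real_polynomial_function ?v1" and pv2': "real_polynomial_function ?v2"
        using pv1 pv2 ps1 ps2 by (auto intro!: real_polynomial_function.intros(3) real_polynomial_function.intros(4)[OF real_polynomial_function.intros(2)])
      have "?L ?v1 ?v2 = 0"
        using Lin_lin[OF T0 cu1 cu2 rc[OF pv1] rc[OF pv2] rc[OF ps1] rc[OF ps2], of a2 a3 1 "-1"] Ls
        by (simp add: y_def)
      from normal_stationary[OF T less_imp_le[OF c1] less_imp_le[OF c2] cu1 cu2 pv1' pv2' pw1 pw2 Lw this optP]
      have "Cf c1 c2 u1 u2 tf ?v1 ?v2 = 0" .
      moreover have "Cf c1 c2 u1 u2 tf ?v1 ?v2 = Cf c1 c2 u1 u2 tf v1 v2 - Cf c1 c2 u1 u2 tf s1 s2"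
        using Cf_lin[OF T0 cu1 cu2 rc[OF pv1] rc[OF pv2] rc[OF ps1] rc[OF ps2], of c1 c2 1 "-1"] by simp
      ultimately show ?thesis using Cs y_def by simp
    qed
    have cg1: "continuous_on {0..tf} (gg1 lam a2 a3 u1 u2 tf)" using cu1 cu2 by (intro continuous_intros)
    have cp2: "continuous_on {0..tf} (pp2 lam u1 tf)" using cu1 by (intro continuous_intros)
    have ch1: "continuous_on {0..tf} (\<lambda>t. c1 * u1 t - gg1 lam a2 a3 u1 u2 tf t)" using cu1 cu2 cg1 by (intro continuous_intros)
    have ch2: "continuous_on {0..tf} (\<lambda>t. c2 * u2 t - pp2 lam u1 tf t)" using cu1 cu2 cp2 by (intro continuous_intros)
    have Z: "P (\<lambda>t. (c1 * u1 t - gg1 lam a2 a3 u1 u2 tf t) * b1 t + (c2 * u2 t - pp2 lam u1 tf t) * b2 t) tf = 0"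
      if pb1: "real_polynomial_function b1" and pb2: "real_polynomial_function b2" for b1 b2 :: "real \<Rightarrow> real"
    proof -
      have "P (\<lambda>t. (c1 * u1 t - gg1 lam a2 a3 u1 u2 tf t) * b1 t + (c2 * u2 t - pp2 lam u1 tf t) * b2 t) tf
        = P (\<lambda>t. 1 * (c1 * u1 t * b1 t + c2 * u2 t * b2 t) + (-1) * (gg1 lam a2 a3 u1 u2 tf t * b1 t + pp2 lam u1 tf t * b2 t)) tf"
        by (simp add: algebra_simps)
      also have "\<dots> = 1 * P (\<lambda>t. c1 * u1 t * b1 t + c2 * u2 t * b2 t) tf + (-1) * P (\<lambda>t. gg1 lam a2 a3 u1 u2 tf t * b1 t + pp2 lam u1 tf t * b2 t) tf"
      proof (rule P_lin[OF T0 _ _ Tin])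
        show "continuous_on {0..tf} (\<lambda>t. c1 * u1 t * b1 t + c2 * u2 t * b2 t)"
          using cu1 cu2 rc[OF pb1] rc[OF pb2] by (intro continuous_intros)
        show "continuous_on {0..tf} (\<lambda>t. gg1 lam a2 a3 u1 u2 tf t * b1 t + pp2 lam u1 tf t * b2 t)"
          using cu1 cu2 cg1 cp2 rc[OF pb1] rc[OF pb2] by (intro continuous_intros)
      qed
      also have "\<dots> = Cf c1 c2 u1 u2 tf b1 b2 - lam \<bullet> ?L b1 b2"
        unfolding Cf_def costate'[OF pb1 pb2] by simp
      also have "\<dots> = 0" using CfL[OF pb1 pb2] by simp
      finally show ?thesis .
    qed
    have h: "c1 * u1 t - gg1 lam a2 a3 u1 u2 tf t = 0 \<and> c2 * u2 t - pp2 lam u1 tf t = 0"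
      if t: "t \<in> {0..tf}" for t
      by (rule pointwise_zero'[OF T ch1 ch2 _ t]) (use Z in blast)
    have e1: "gg1 lam a2 a3 u1 u2 tf t = c1 * u1 t" and e2: "pp2 lam u1 tf t = c2 * u2 t"
      if "t \<in> {0..tf}" for t using h[OF that] by auto
    show ?thesis
    proof (rule exI[of _ "gg1 lam a2 a3 u1 u2 tf"], rule exI[of _ "pp2 lam u1 tf"], rule exI[of _ "pp3 lam u1 tf"],
        rule exI[of _ "\<lambda>t. lam$0"], intro ballI conjI)
      fix t assume t: "t \<in> {0..tf}"
      show "u1 t = gg1 lam a2 a3 u1 u2 tf t / c1" using e1[OF t] c1 by simp
      show "u2 t = pp2 lam u1 tf t / c2" using e2[OF t] c2 by simp
      have "(gg1 lam a2 a3 u1 u2 tf has_real_derivative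
          0 + (- (lam$0 * u1 t) * Yl a2 u2 t + u2 t * pp3 lam u1 tf t) + lam$0 * (u1 t * Yl a2 u2 t))
          (at t within {0..tf})"
        unfolding gg1_def
        by (rule DERIV_add[OF DERIV_add[OF DERIV_const DERIV_mult[OF pp3_deriv[OF cu1 t] Yl_deriv[OF cu2 t]]]
              DERIV_cmult[OF Y3_deriv[OF cu1 cu2 t]]])
      then show "(gg1 lam a2 a3 u1 u2 tf has_real_derivative 1 / c2 * pp2 lam u1 tf t * pp3 lam u1 tf t) (at t within {0..tf})"
        by (rule deriv_eqI) (use c2 e2[OF t] in \<open>simp add: field_simps\<close>)
      show "(pp2 lam u1 tf has_real_derivative - 1 / c1 * gg1 lam a2 a3 u1 u2 tf t * pp3 lam u1 tf t) (at t within {0..tf})"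
        by (rule deriv_eqI[OF pp2_deriv[OF cu1 t]]) (use c1 e1[OF t] in \<open>simp add: field_simps\<close>)
      show "(pp3 lam u1 tf has_real_derivative - 1 / c1 * gg1 lam a2 a3 u1 u2 tf t * lam$0) (at t within {0..tf})"
        by (rule deriv_eqI[OF pp3_deriv[OF cu1 t]]) (use c1 e1[OF t] in \<open>simp add: field_simps\<close>)
      show "((\<lambda>t. lam$0) has_real_derivative 0) (at t within {0..tf})" by simp
    qed
  next
    case False
    have eS: "span S = S" using subS by simp
    have "span S \<subset> span UNIV" unfolding eS using False by (simp add: psubset_eq)
    then obtain lam :: "real^4" where lam: "lam \<noteq> 0" and orth: "\<And>y. y \<in> span S \<Longrightarrow> orthogonal lam y"
      by (rule orthogonal_to_subspace_exists_gen) blast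
    have cg1: "continuous_on {0..tf} (gg1 lam a2 a3 u1 u2 tf)" using cu1 cu2 by (intro continuous_intros)
    have cp2: "continuous_on {0..tf} (pp2 lam u1 tf)" using cu1 by (intro continuous_intros)
    have Zb: "P (\<lambda>t. gg1 lam a2 a3 u1 u2 tf t * b1 t + pp2 lam u1 tf t * b2 t) tf = 0"
      if pb1: "real_polynomial_function b1" and pb2: "real_polynomial_function b2" for b1 b2 :: "real \<Rightarrow> real"
    proof -
      have "?L b1 b2 \<in> S" unfolding S_def using pb1 pb2 by blast
      then have "?L b1 b2 \<in> span S" by (rule span_base)
      then have "lam \<bullet> ?L b1 b2 = 0" using orth by (simp add: orthogonal_def)
      then show ?thesis using costate'[OF pb1 pb2] by simp
    qed
    have z: "gg1 lam a2 a3 u1 u2 tf t = 0 \<and> pp2 lam u1 tf t = 0" if t: "t \<in> {0..tf}" for t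
      by (rule pointwise_zero'[OF T cg1 cp2 _ t]) (use Zb in blast)
    have u10: "u1 t = 0" if "t \<in> {0..tf}" for t
    proof (rule abnormal_u1[OF T cu1 cu2 lam _ _ that])
      show "\<And>s. s \<in> {0..tf} \<Longrightarrow> gg1 lam a2 a3 u1 u2 tf s = 0" using z by blast
      show "\<And>s. s \<in> {0..tf} \<Longrightarrow> pp2 lam u1 tf s = 0" using z by blast
    qed
    define m where "m = P u2 tf / tf"
    have Pu1: "P u1 t = 0" if "t \<in> {0..tf}" for t
      using P_cong[of t u1 "\<lambda>_. 0"] u10 that by (simp add: P_def)
    have EE: "Evec a1 a2 a3 a4 (\<lambda>_. 0) (\<lambda>_. m) tf = Evec a1 a2 a3 a4 u1 u2 tf"
    proof -
      have "Y3 a2 a3 u1 u2 tf = a3"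
        using P_cong[of tf "\<lambda>s. u1 s * Yl a2 u2 s" "\<lambda>_. 0"] u10 by (simp add: Y3_def P_def)
      moreover have "Y4 a2 a3 a4 u1 u2 tf = a4"
        using P_cong[of tf "\<lambda>s. u1 s * Y3 a2 a3 u1 u2 s" "\<lambda>_. 0"] u10 by (simp add: Y4_def P_def)
      moreover have "Yl a2 (\<lambda>_. m) tf = Yl a2 u2 tf"
      proof -
        have "Yl a2 (\<lambda>_. m) tf = a2 + m * tf" by (rule Yl_const[OF T0])
        also have "\<dots> = Yl a2 u2 tf" using T by (simp add: Yl_def m_def)
        finally show ?thesis .
      qed
      ultimately show ?thesis using Pu1[OF Tin]
        by (simp add: Evec_def Yl_def Y3_def Y4_def P_def)
    qed
    have "cost c1 c2 tf u1 u2 \<le> cost c1 c2 tf (\<lambda>_. 0) (\<lambda>_. m)"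
      by (rule opt[OF smooth_const smooth_const EE])
    moreover have "cost c1 c2 tf (\<lambda>_. 0) (\<lambda>_. m) = 1/2 * (tf * (c2 * m^2))"
      using T by (simp add: cost_def)
    moreover have "cost c1 c2 tf u1 u2 = 1/2 * (c2 * P (\<lambda>t. u2 t * u2 t) tf)"
    proof -
      have "P (\<lambda>t. c1 * (u1 t)^2 + c2 * (u2 t)^2) tf = P (\<lambda>t. c2 * (u2 t * u2 t)) tf"
        by (rule P_cong) (use u10 in \<open>simp add: power2_eq_square\<close>)
      then show ?thesis by (simp add: cost_def P_def)
    qed
    ultimately have "c2 * P (\<lambda>t. u2 t * u2 t) tf \<le> c2 * (tf * m^2)" by (simp add: mult.left_commute)
    then have sq: "P (\<lambda>t. u2 t * u2 t) tf \<le> tf * m^2" using c2 by simp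
    have cu22: "continuous_on {0..tf} (\<lambda>t. u2 t * u2 t)" using cu2 by (intro continuous_intros)
    have "P (\<lambda>t. (u2 t - m) * (u2 t - m)) tf = P (\<lambda>t. 1 * (u2 t * u2 t) + (- 2 * m) * u2 t) tf + P (\<lambda>t. m^2) tf"
    proof -
      have "P (\<lambda>t. (u2 t - m) * (u2 t - m)) tf = P (\<lambda>t. (1 * (u2 t * u2 t) + (- 2 * m) * u2 t) + m^2) tf"
        by (simp add: algebra_simps power2_eq_square)
      also have "\<dots> = P (\<lambda>t. 1 * (u2 t * u2 t) + (- 2 * m) * u2 t) tf + P (\<lambda>t. m^2) tf"
        by (rule P_add[OF T0 _ _ Tin]; intro continuous_intros cu2)
      finally show ?thesis .
    qed
    also have "\<dots> = (1 * P (\<lambda>t. u2 t * u2 t) tf + (- 2 * m) * P u2 tf) + tf * m^2"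
      by (subst P_lin[OF T0 cu22 cu2 Tin]) (simp add: P_def T0)
    also have "\<dots> = P (\<lambda>t. u2 t * u2 t) tf - 2 * m * P u2 tf + tf * m^2" by simp
    also have "\<dots> = P (\<lambda>t. u2 t * u2 t) tf - tf * m^2"
      using T by (simp add: m_def power2_eq_square field_simps)
    also have "\<dots> \<le> 0" using sq by simp
    finally have le0: "P (\<lambda>t. (u2 t - m) * (u2 t - m)) tf \<le> 0" .
    have cu2m: "continuous_on {0..tf} (\<lambda>t. u2 t - m)" using cu2 by (intro continuous_intros)
    have u2m: "u2 t - m = 0" if "t \<in> {0..tf}" for t
      using sq_int_zero[OF T cu2m _ that] le0 by simp
    show ?thesis
    proof (rule exI[of _ "\<lambda>_. 0"], rule exI[of _ "\<lambda>_. c2 * m"], rule exI[of _ "\<lambda>_. 0"], rule exI[of _ "\<lambda>_. 0"], intro ballI conjI)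
      fix t assume t: "t \<in> {0..tf}"
      show "u1 t = 0 / c1" using u10[OF t] by simp
      show "u2 t = c2 * m / c2" using u2m[OF t] c2 by simp
    qed auto
  qed
qed


end
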